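(* Let $\mathbb{F}$ be any field and let $q\in\mathbb{F}$ with $q\neq 0$. Then the tensor rank of $\langle 2,2,2\rangle_q$ over $\mathbb{F}$ is at least $7$.
   Context: Let $e_{ij}$ ($i,j\in\{1,2\}$) be the standard basis of $\mathbb{F}^{2\times 2}$ and $\langle 2,2,2\rangle=\sum_{i,j,k\in\{1,2\}} e_{ij}\otimes e_{jk}\otimes e_{ki}$. For $q\in\mathbb{F}$, the perturbed matrix multiplication tensor is $\langle 2,2,2\rangle_q=\langle 2,2,2\rangle+(q-1)\,e_{11}\otimes e_{11}\otimes e_{11}$, i.e. $\langle 2,2,2\rangle$ with the coefficient of $e_{11}\otimes e_{11}\otimes e_{11}$ replaced by $q$. Tensor rank is the minimal number of simple tensors $v_1\otimes v_2\otimes v_3$ summing to the tensor. *)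

theory Defs
  imports Main
begin

text \<open>Basis index set of F^{2x2}: pairs (i,j) with i,j in {1,2}; e_{ij} is the basis
  vector at index (i,j). A tensor in F^{2x2} (x) F^{2x2} (x) F^{2x2} is given by its
  coordinates T a b c for a,b,c in idx2 (values outside idx2 are irrelevant).\<close>

definition idx2 :: "(nat \<times> nat) set" where
  "idx2 = {1,2} \<times> {1,2}"

definition sum_of_simple :: "((nat \<times> nat) \<Rightarrow> (nat \<times> nat) \<Rightarrow> (nat \<times> nat) \<Rightarrow> 'a::field) \<Rightarrow> nat \<Rightarrow> bool" where
  "sum_of_simple T r \<longleftrightarrow>
     (\<exists>u v w :: nat \<Rightarrow> (nat \<times> nat) \<Rightarrow> 'a.
        \<forall>a\<in>idx2. \<forall>b\<in>idx2. \<forall>c\<in>idx2. T a b c = (\<Sum>l<r. u l a * v l b * w l c))"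

definition tensor_rank :: "((nat \<times> nat) \<Rightarrow> (nat \<times> nat) \<Rightarrow> (nat \<times> nat) \<Rightarrow> 'a::field) \<Rightarrow> nat" where
  "tensor_rank T = (LEAST r. sum_of_simple T r)"

text \<open>Coordinates of <2,2,2> = sum_{i,j,k} e_ij (x) e_jk (x) e_ki.\<close>
definition mm222 :: "(nat \<times> nat) \<Rightarrow> (nat \<times> nat) \<Rightarrow> (nat \<times> nat) \<Rightarrow> 'a::field" where
  "mm222 a b c = (if snd a = fst b \<and> snd b = fst c \<and> snd c = fst a then 1 else 0)"

definition mm222q :: "'a::field \<Rightarrow> (nat \<times> nat) \<Rightarrow> (nat \<times> nat) \<Rightarrow> (nat \<times> nat) \<Rightarrow> 'a" where
  "mm222q q a b c = mm222 a b c + (if a = (1,1) \<and> b = (1,1) \<and> c = (1,1) then q - 1 else 0)"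

end

theory Submission
  imports Defs
begin

lemma hs_exists:
  fixes A :: "nat \<Rightarrow> nat \<Rightarrow> 'a::field"
  assumes "finite R" "card R < n"
  shows "\<exists>x. (\<exists>j<n. x j \<noteq> 0) \<and> (\<forall>i\<in>R. (\<Sum>j<n. A i j * x j) = 0)"
  using assms
proof (induction n arbitrary: R A)
  case 0
  then show ?case by simp
next
  case (Suc n)
  show ?case
  proof (cases "\<forall>i\<in>R. A i n = 0")
    case True
    let ?x = "\<lambda>j. if j = n then (1::'a) else 0"
    have "\<forall>i\<in>R. (\<Sum>j<Suc n. A i j * ?x j) = 0"
      using True by (simp add: sum.If_cases)
    then show ?thesis by (intro exI[of _ ?x]) auto
  next
    case False
    then obtain r where r: "r \<in> R" "A r n \<noteq> 0" by auto
    define R' where "R' = R - {r}"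
    have fin: "finite R'" using Suc.prems unfolding R'_def by auto
    have "card R > 0" using Suc.prems r card_gt_0_iff by blast
    then have cR': "card R' < n" using Suc.prems r unfolding R'_def
      by (simp add: card_Diff_singleton)
    define B where "B i j = A i j - (A i n / A r n) * A r j" for i j
    obtain x' where x': "\<exists>j<n. x' j \<noteq> 0" "\<forall>i\<in>R'. (\<Sum>j<n. B i j * x' j) = 0"
      using Suc.IH[OF fin cR', of B] by blast
    define S where "S = (\<Sum>j<n. A r j * x' j)"
    define x where "x j = (if j < n then x' j else if j = n then - S / A r n else 0)" for j
    have sx: "(\<Sum>j<n. C j * x j) = (\<Sum>j<n. C j * x' j)" for C
      by (rule sum.cong) (auto simp: x_def)
    have xn: "x n = - S / A r n" by (simp add: x_def)
    have row: "(\<Sum>j<Suc n. A i j * x j) = 0" if "i \<in> R" for i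
    proof -
      have e: "(\<Sum>j<Suc n. A i j * x j) = (\<Sum>j<n. A i j * x' j) + A i n * x n"
        using sx[of "A i"] by simp
      show ?thesis
    proof (cases "i = r")
      case True
      then show ?thesis using r(2) unfolding e by (simp add: xn S_def)
    next
      case False
      then have "i \<in> R'" using that unfolding R'_def by auto
      then have "(\<Sum>j<n. B i j * x' j) = 0" using x'(2) by auto
      then have "(\<Sum>j<n. A i j * x' j) - (A i n / A r n) * S = 0"
        unfolding B_def S_def
        by (simp add: algebra_simps sum_subtractf sum_distrib_left)
      then show ?thesis using r(2) unfolding e by (simp add: xn field_simps)
    qed
    qed
    have "\<exists>j<Suc n. x j \<noteq> 0" using x'(1) by (auto simp: x_def)
    then show ?thesis using row by blast
  qed
qed

lemma sum_idx2: "(\<Sum>c\<in>idx2. f c) = f (1,1) + f (1,2) + f (2,1) + f (2,2)"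
  by (simp add: idx2_def add_ac)

lemma ker3:
  fixes f1 f2 f3 :: "nat \<times> nat \<Rightarrow> 'a::field"
  shows "\<exists>M. (\<exists>c\<in>idx2. M c \<noteq> 0) \<and> (\<Sum>c\<in>idx2. f1 c * M c) = 0 \<and>
     (\<Sum>c\<in>idx2. f2 c * M c) = 0 \<and> (\<Sum>c\<in>idx2. f3 c * M c) = 0"
proof -
  define enc :: "nat \<Rightarrow> nat \<times> nat" where
    "enc j = (if j = 0 then (1,1) else if j = 1 then (1,2) else if j = 2 then (2,1) else (2,2))" for j
  define F where "F i = (if i = 0 then f1 else if i = 1 then f2 else f3)" for i :: nat
  obtain x :: "nat \<Rightarrow> 'a" where x: "\<exists>j<4. x j \<noteq> 0" "\<forall>i\<in>{0,1,2}. (\<Sum>j<4. F i (enc j) * x j) = 0"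
    using hs_exists[of "{0::nat,1,2}" 4 "\<lambda>i j. F i (enc j)"] by auto
  define M where "M c = (if c = (1,1) then x 0 else if c = (1,2) then x 1 else if c = (2,1) then x 2 else x 3)" for c :: "nat \<times> nat"
  have e: "(\<Sum>c\<in>idx2. f c * M c) = (\<Sum>j<4. f (enc j) * x j)" for f :: "nat \<times> nat \<Rightarrow> 'a"
    by (simp add: sum_idx2 M_def enc_def eval_nat_numeral add_ac)
  have "\<exists>c\<in>idx2. M c \<noteq> 0"
  proof -
    obtain j where "j < 4" "x j \<noteq> 0" using x(1) by blast
    then show ?thesis unfolding M_def idx2_def
      by (cases j) (auto simp: eval_nat_numeral less_Suc_eq)
  qed
  moreover have "(\<Sum>c\<in>idx2. f1 c * M c) = 0" using x(2) unfolding e by (auto simp: F_def)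
  moreover have "(\<Sum>c\<in>idx2. f2 c * M c) = 0" using x(2) unfolding e by (auto simp: F_def)
  moreover have "(\<Sum>c\<in>idx2. f3 c * M c) = 0" using x(2) unfolding e by (auto simp: F_def)
  ultimately show ?thesis by blast
qed

lemma dep5:
  fixes g :: "nat \<Rightarrow> nat \<times> nat \<Rightarrow> 'a::field"
  shows "\<exists>lam. (\<exists>i<5. lam i \<noteq> 0) \<and> (\<forall>c\<in>idx2. (\<Sum>i<5. lam i * g i c) = 0)"
proof -
  define enc :: "nat \<Rightarrow> nat \<times> nat" where
    "enc j = (if j = 0 then (1,1) else if j = 1 then (1,2) else if j = 2 then (2,1) else (2,2))" for j
  obtain x :: "nat \<Rightarrow> 'a" where x: "\<exists>j<5. x j \<noteq> 0" "\<forall>r\<in>{0,1,2,3}. (\<Sum>j<5. g j (enc r) * x j) = 0"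
    using hs_exists[of "{0::nat,1,2,3}" 5 "\<lambda>r j. g j (enc r)"] by auto
  have "\<forall>c\<in>idx2. (\<Sum>i<5. x i * g i c) = 0"
  proof
    fix c assume "c \<in> idx2"
    then have "c = enc 0 \<or> c = enc 1 \<or> c = enc 2 \<or> c = enc 3" by (auto simp: idx2_def enc_def)
    then show "(\<Sum>i<5. x i * g i c) = 0" using x(2) by (auto simp: mult.commute)
  qed
  then show ?thesis using x(1) by blast
qed

lemma sing2:
  fixes a1 a2 b1 b2 :: "'a::field"
  assumes "a1*b2 - a2*b1 = 0"
  shows "\<exists>s t. (s \<noteq> 0 \<or> t \<noteq> 0) \<and> s*a1 + t*a2 = 0 \<and> s*b1 + t*b2 = 0"
proof (cases "a1 \<noteq> 0 \<or> a2 \<noteq> 0")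
  case True
  then show ?thesis using assms by (intro exI[of _ a2] exI[of _ "-a1"]) (auto simp: algebra_simps)
next
  case False
  show ?thesis
  proof (cases "b1 \<noteq> 0 \<or> b2 \<noteq> 0")
    case True
    then show ?thesis using False by (intro exI[of _ b2] exI[of _ "-b1"]) (auto simp: algebra_simps)
  next
    case False2: False
    then show ?thesis using False by (intro exI[of _ 1] exI[of _ 0]) auto
  qed
qed

lemma elim3:
  fixes a1 a2 b1 b2 c1 c2 mx my mz :: "'a::field"
  assumes "a1*mx + b1*my + c1*mz = 0" "a2*mx + b2*my + c2*mz = 0" "b1*c2 - b2*c1 \<noteq> 0"
  shows "my = - ((a1*c2 - a2*c1)/(b1*c2 - b2*c1)) * mx"
proof -
  have "c2*(a1*mx + b1*my + c1*mz) - c1*(a2*mx + b2*my + c2*mz) = 0" using assms by simp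
  then have "(a1*c2 - a2*c1)*mx + (b1*c2 - b2*c1)*my = 0" by (simp add: algebra_simps)
  then show ?thesis using assms(3) by (simp add: field_simps)
qed

lemma par2:
  fixes A B C D :: "nat \<Rightarrow> 'a::field"
  assumes eq: "\<forall>i\<in>{1,2}. \<forall>k\<in>{1,2}. A i * B k = \<kappa> * (C i * D k)"
    and "\<kappa> \<noteq> 0" "i0 \<in> {1,2}" "k0 \<in> {1,2}" "C i0 \<noteq> 0" "D k0 \<noteq> 0"
  shows "(\<exists>d. \<forall>i\<in>{1,2}. A i = d * C i) \<and> (\<exists>d. \<forall>k\<in>{1,2}. B k = d * D k)"
proof -
  have "A i0 * B k0 \<noteq> 0" using eq assms by auto
  then have a: "A i0 \<noteq> 0" and b: "B k0 \<noteq> 0" by auto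
  have 1: "\<forall>i\<in>{1,2}. A i = (\<kappa> * D k0 / B k0) * C i"
  proof
    fix i :: nat assume i: "i \<in> {1,2}"
    have "A i * B k0 = \<kappa> * (C i * D k0)" using eq i assms by auto
    then show "A i = (\<kappa> * D k0 / B k0) * C i" using b by (simp add: field_simps)
  qed
  have 2: "\<forall>k\<in>{1,2}. B k = (\<kappa> * C i0 / A i0) * D k"
  proof
    fix k :: nat assume k: "k \<in> {1,2}"
    have "A i0 * B k = \<kappa> * (C i0 * D k)" using eq k assms by auto
    then show "B k = (\<kappa> * C i0 / A i0) * D k" using a by (simp add: field_simps)
  qed
  show ?thesis using 1 2 by blast
qed

lemma sum6_1:
  assumes "f < (6::nat)" "\<forall>l<6. l \<noteq> f \<longrightarrow> g l = 0"
  shows "(\<Sum>l<6. g l) = g f"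
proof -
  have "(\<Sum>l<6. g l) = (\<Sum>l\<in>{f}. g l)"
    using assms by (intro sum.mono_neutral_right) auto
  then show ?thesis by simp
qed

lemma sum6_3:
  assumes "x < (6::nat)" "y < 6" "z < 6" "x \<noteq> y" "y \<noteq> z" "x \<noteq> z"
    "\<forall>l<6. l \<noteq> x \<and> l \<noteq> y \<and> l \<noteq> z \<longrightarrow> g l = 0"
  shows "(\<Sum>l<6. g l) = g x + g y + g z"
proof -
  have "(\<Sum>l<6. g l) = (\<Sum>l\<in>{x,y,z}. g l)"
    using assms by (intro sum.mono_neutral_right) auto
  then show ?thesis using assms by (simp add: add_ac)
qed

locale dec6 =
  fixes q :: "'a::field" and u v w :: "nat \<Rightarrow> nat \<times> nat \<Rightarrow> 'a"
  assumes qnz: "q \<noteq> 0"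
    and dec: "\<And>a b c. a \<in> idx2 \<Longrightarrow> b \<in> idx2 \<Longrightarrow> c \<in> idx2 \<Longrightarrow>
       mm222q q a b c = (\<Sum>l<6. u l a * v l b * w l c)"
begin

definition wl :: "nat \<Rightarrow> (nat \<times> nat \<Rightarrow> 'a) \<Rightarrow> 'a" where
  "wl l M = (\<Sum>c\<in>idx2. w l c * M c)"

definition blk :: "nat \<Rightarrow> (nat \<times> nat \<Rightarrow> 'a) \<Rightarrow> nat \<Rightarrow> nat \<Rightarrow> 'a" where
  "blk j M i k = M (k,i) + (if j = 1 \<and> i = 1 \<and> k = 1 then (q - 1) * M (1,1) else 0)"

lemma KI:
  assumes "i \<in> {1,2}" "k \<in> {1,2}" "j \<in> {1,2}" "j' \<in> {1,2}"
  shows "(\<Sum>l<6. u l (i,j) * v l (j',k) * wl l M) = (if j = j' then blk j M i k else 0)"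
proof -
  have "(\<Sum>l<6. u l (i,j) * v l (j',k) * wl l M) =
        (\<Sum>c\<in>idx2. M c * (\<Sum>l<6. u l (i,j) * v l (j',k) * w l c))"
    unfolding wl_def by (simp add: sum_distrib_left sum_distrib_right mult_ac sum.swap[of _ idx2])
  also have "\<dots> = (\<Sum>c\<in>idx2. M c * mm222q q (i,j) (j',k) c)"
  proof (intro sum.cong refl)
    fix c assume c: "c \<in> idx2"
    have "(i,j) \<in> idx2" "(j',k) \<in> idx2" using assms by (auto simp: idx2_def)
    then show "M c * (\<Sum>l<6. u l (i,j) * v l (j',k) * w l c) = M c * mm222q q (i,j) (j',k) c"
      using dec c by simp
  qed
  also have "\<dots> = (if j = j' then blk j M i k else 0)"
    using assms unfolding sum_idx2 mm222q_def mm222_def blk_def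
    by (auto simp: algebra_simps)
  finally show ?thesis .
qed

lemma wl_lin: "wl l (\<lambda>c. s * M1 c + t * M2 c) = s * wl l M1 + t * wl l M2"
  unfolding wl_def by (simp add: sum.distrib sum_distrib_left algebra_simps)

lemma one_alive_False:
  assumes nz: "\<exists>c\<in>idx2. M c \<noteq> 0" and f: "f < 6" and dead: "\<forall>l<6. l \<noteq> f \<longrightarrow> wl l M = 0"
  shows False
proof -
  have E: "u f (i,j) * v f (j',k) * wl f M = (if j = j' then blk j M i k else 0)"
    if "i \<in> {1,2}" "k \<in> {1,2}" "j \<in> {1,2}" "j' \<in> {1,2}" for i k j j'
  proof -
    have "(\<Sum>l<6. u l (i,j) * v l (j',k) * wl l M) = u f (i,j) * v f (j',k) * wl f M"
      using f dead by (intro sum6_1) auto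
    then show ?thesis using KI[OF that] by simp
  qed
  obtain k0 i0 where ki: "k0 \<in> {1,2}" "i0 \<in> {1,2}" "M (k0,i0) \<noteq> 0"
    using nz by (auto simp: idx2_def)
  have "blk 2 M i0 k0 \<noteq> 0" using ki by (simp add: blk_def)
  then have "u f (i0,2) * v f (2,k0) * wl f M \<noteq> 0" using E[of i0 k0 2 2] ki by simp
  then have v2: "v f (2,k0) \<noteq> 0" and wf: "wl f M \<noteq> 0" by auto
  obtain i1 k1 where ik1: "i1 \<in> {1,2}" "k1 \<in> {1,2}" "blk 1 M i1 k1 \<noteq> 0"
  proof (cases "i0 = 1 \<and> k0 = 1")
    case True
    then have "blk 1 M 1 1 = q * M (1,1)" by (simp add: blk_def algebra_simps)
    then have "blk 1 M 1 1 \<noteq> 0" using True ki qnz by simp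
    then show ?thesis using that by blast
  next
    case False
    then have "blk 1 M i0 k0 \<noteq> 0" using ki by (auto simp: blk_def)
    then show ?thesis using that ki by blast
  qed
  have "u f (i1,1) * v f (1,k1) * wl f M \<noteq> 0" using E[of i1 k1 1 1] ik1 by simp
  then have u1: "u f (i1,1) \<noteq> 0" by auto
  have "u f (i1,1) * v f (2,k0) * wl f M = 0" using E[of i1 k0 1 2] ik1 ki by simp
  then show False using u1 v2 wf by simp
qed

end

lemma cramer2:
  fixes a b c d D :: "'a::field"
  assumes "D = a*d - c*b" "D \<noteq> 0"
  shows "(- c / D) * a + (a / D) * c = 0" "(- c / D) * b + (a / D) * d = 1"
    "(d / D) * a + (- b / D) * c = 1" "(d / D) * b + (- b / D) * d = 0"
  using assms by (simp_all add: field_simps)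

lemma sum3_one:
  fixes T :: "nat \<Rightarrow> 'b::comm_monoid_add"
  assumes "f \<in> {x,y,z}" "x \<noteq> y" "y \<noteq> z" "x \<noteq> z" "\<forall>l\<in>{x,y,z}. l \<noteq> f \<longrightarrow> T l = 0"
  shows "T x + T y + T z = T f"
  using assms by auto

context dec6 begin

lemma blk1_inj:
  assumes "\<forall>i\<in>{1,2}. \<forall>k\<in>{1,2}. blk 1 N i k = 0"
  shows "\<forall>c\<in>idx2. N c = 0"
proof -
  have a: "N (1,2) = 0" "N (2,1) = 0" "N (2,2) = 0"
    using assms[rule_format, of 2 1] assms[rule_format, of 1 2] assms[rule_format, of 2 2]
    by (auto simp: blk_def)
  have "q * N (1,1) = 0" using assms[rule_format, of 1 1] by (simp add: blk_def algebra_simps)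
  then have "N (1,1) = 0" using qnz by simp
  then show ?thesis using a by (auto simp: idx2_def)
qed

lemma blk_lin: "blk j (\<lambda>c. s * M1 c + t * M2 c) i k = s * blk j M1 i k + t * blk j M2 i k"
  by (simp add: blk_def algebra_simps)

lemma lemmaA:
  assumes ind: "\<And>s t. \<forall>c\<in>idx2. s * M1 c + t * M2 c = 0 \<Longrightarrow> s = 0 \<and> t = 0"
    and xyz: "x < 6" "y < 6" "z < 6" "x \<noteq> y" "y \<noteq> z" "x \<noteq> z"
    and dead: "\<forall>l<6. l \<noteq> x \<and> l \<noteq> y \<and> l \<noteq> z \<longrightarrow> wl l M1 = 0 \<and> wl l M2 = 0"
  shows False
proof -
  define L where "L s t = (\<lambda>c. s * M1 c + t * M2 c)" for s t
  have wlL: "wl l (L s t) = s * wl l M1 + t * wl l M2" for l s t unfolding L_def by (rule wl_lin)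
  have deadL: "\<forall>l<6. l \<noteq> x \<and> l \<noteq> y \<and> l \<noteq> z \<longrightarrow> wl l (L s t) = 0" for s t
    using dead by (simp add: wlL)
  have nzL: "\<exists>c\<in>idx2. L s t c \<noteq> 0" if "s \<noteq> 0 \<or> t \<noteq> 0" for s t
  proof -
    have "\<not> (\<forall>c\<in>idx2. s * M1 c + t * M2 c = 0)" using ind[of s t] that by blast
    then show ?thesis unfolding L_def by blast
  qed
  have L10: "L 1 0 = M1" "L 0 1 = M2" unfolding L_def by (simp_all add: fun_eq_iff)
  have K3: "u x (i,j) * v x (j',k) * wl x (L s t) + u y (i,j) * v y (j',k) * wl y (L s t)
      + u z (i,j) * v z (j',k) * wl z (L s t) = (if j = j' then blk j (L s t) i k else 0)"
    if "i \<in> {1,2}" "k \<in> {1,2}" "j \<in> {1,2}" "j' \<in> {1,2}" for i k j j' s t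
  proof -
    have "(\<Sum>l<6. u l (i,j) * v l (j',k) * wl l (L s t)) = u x (i,j) * v x (j',k) * wl x (L s t)
      + u y (i,j) * v y (j',k) * wl y (L s t) + u z (i,j) * v z (j',k) * wl z (L s t)"
      using deadL[of s t] by (intro sum6_3[OF xyz]) auto
    then show ?thesis using KI[OF that] by simp
  qed
  have only: "False" if "f < 6" "\<forall>l<6. l \<noteq> f \<longrightarrow> wl l (L s t) = 0" "s \<noteq> 0 \<or> t \<noteq> 0" for f s t
    using one_alive_False[OF nzL[OF that(3)] that(1,2)] .
  define a1 where "a1 = wl x M1"
  define a2 where "a2 = wl x M2"
  define b1 where "b1 = wl y M1"
  define b2 where "b2 = wl y M2"
  define c1 where "c1 = wl z M1"
  define c2 where "c2 = wl z M2"
  have Dxy: "a1*b2 - a2*b1 \<noteq> 0"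
  proof
    assume "a1*b2 - a2*b1 = 0"
    then obtain s t where st: "s \<noteq> 0 \<or> t \<noteq> 0" "s*a1 + t*a2 = 0" "s*b1 + t*b2 = 0"
      using sing2 by blast
    have "\<forall>l<6. l \<noteq> z \<longrightarrow> wl l (L s t) = 0"
      using deadL[of s t] st wlL unfolding a1_def a2_def b1_def b2_def by auto
    then show False using only[of z s t] xyz st by blast
  qed
  have Dxz: "a1*c2 - a2*c1 \<noteq> 0"
  proof
    assume "a1*c2 - a2*c1 = 0"
    then obtain s t where st: "s \<noteq> 0 \<or> t \<noteq> 0" "s*a1 + t*a2 = 0" "s*c1 + t*c2 = 0"
      using sing2 by blast
    have "\<forall>l<6. l \<noteq> y \<longrightarrow> wl l (L s t) = 0"
      using deadL[of s t] st wlL unfolding a1_def a2_def c1_def c2_def by auto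
    then show False using only[of y s t] xyz st by blast
  qed
  have Dyz: "b1*c2 - b2*c1 \<noteq> 0"
  proof
    assume "b1*c2 - b2*c1 = 0"
    then obtain s t where st: "s \<noteq> 0 \<or> t \<noteq> 0" "s*b1 + t*b2 = 0" "s*c1 + t*c2 = 0"
      using sing2 by blast
    have "\<forall>l<6. l \<noteq> x \<longrightarrow> wl l (L s t) = 0"
      using deadL[of s t] st wlL unfolding b1_def b2_def c1_def c2_def by auto
    then show False using only[of x s t] xyz st by blast
  qed
  define ky where "ky = - ((a1*c2 - a2*c1)/(b1*c2 - b2*c1))"
  define kz where "kz = - ((a1*b2 - a2*b1)/(c1*b2 - c2*b1))"
  have Dzy: "c1*b2 - c2*b1 \<noteq> 0" using Dyz by (simp add: algebra_simps)
  have kynz: "ky \<noteq> 0" using Dxz Dyz unfolding ky_def by simp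
  have kznz: "kz \<noteq> 0" using Dxy Dzy unfolding kz_def by simp
  have propor: "u y (i,j) * v y (j',k) = ky * (u x (i,j) * v x (j',k)) \<and>
              u z (i,j) * v z (j',k) = kz * (u x (i,j) * v x (j',k))"
    if ijk: "i \<in> {1,2}" "k \<in> {1,2}" "j \<in> {1,2}" "j' \<in> {1,2}" "j \<noteq> j'" for i k j j'
  proof -
    define mx where "mx = u x (i,j) * v x (j',k)"
    define my where "my = u y (i,j) * v y (j',k)"
    define mz where "mz = u z (i,j) * v z (j',k)"
    have e1: "a1*mx + b1*my + c1*mz = 0"
      using K3[OF ijk(1-4), of 1 0] ijk(5) unfolding L10 a1_def b1_def c1_def mx_def my_def mz_def
      by (simp add: mult_ac)
    have e2: "a2*mx + b2*my + c2*mz = 0"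
      using K3[OF ijk(1-4), of 0 1] ijk(5) unfolding L10 a2_def b2_def c2_def mx_def my_def mz_def
      by (simp add: mult_ac)
    have "my = ky * mx" unfolding ky_def using elim3[OF e1 e2 Dyz] by simp
    moreover have "mz = kz * mx" unfolding kz_def
      using elim3[of a1 mx c1 mz b1 my a2 c2 b2] e1 e2 Dzy by (simp add: add_ac)
    ultimately show ?thesis unfolding mx_def my_def mz_def by simp
  qed
  show False
  proof (cases "\<exists>i0\<in>{1,2}. \<exists>k0\<in>{1,2}. u x (i0,1) * v x (2,k0) \<noteq> 0")
    case True
    then obtain i0 k0 where ik0: "i0 \<in> {1,2}" "k0 \<in> {1,2}" "u x (i0,1) \<noteq> 0" "v x (2,k0) \<noteq> 0"
      by auto
    define X where "X i = u x (i,1)" for i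
    define Y where "Y k = v x (2,k)" for k
    have parl: "(\<exists>d. \<forall>i\<in>{1,2}. u l (i,1) = d * X i) \<and> (\<exists>e. \<forall>k\<in>{1,2}. v l (2,k) = e * Y k)"
      if "l = y \<or> l = z" for l
    proof -
      have eq: "\<forall>i\<in>{1,2}. \<forall>k\<in>{1,2}. u l (i,1) * v l (2,k) = (if l = y then ky else kz) * (X i * Y k)"
        using propor[of _ _ 1 2] that xyz unfolding X_def Y_def by auto
      have "(if l = y then ky else kz) \<noteq> 0" using kynz kznz by simp
      then show ?thesis using par2[OF eq _ ik0(1,2)] ik0 unfolding X_def Y_def by auto
    qed
    obtain dy ey where dy: "\<forall>i\<in>{1,2}. u y (i,1) = dy * X i" and ey: "\<forall>k\<in>{1,2}. v y (2,k) = ey * Y k"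
      using parl[of y] by auto
    obtain dz ez where dz: "\<forall>i\<in>{1,2}. u z (i,1) = dz * X i" and ez: "\<forall>k\<in>{1,2}. v z (2,k) = ez * Y k"
      using parl[of z] by auto
    define r where "r s t k = v x (1,k) * wl x (L s t) + dy * v y (1,k) * wl y (L s t)
        + dz * v z (1,k) * wl z (L s t)" for s t k
    have B1: "blk 1 (L s t) i k = X i * r s t k" if "i \<in> {1,2}" "k \<in> {1,2}" for s t i k
    proof -
      have e: "u x (i,1) * v x (1,k) * wl x (L s t) + u y (i,1) * v y (1,k) * wl y (L s t)
          + u z (i,1) * v z (1,k) * wl z (L s t) = blk 1 (L s t) i k"
        using K3[of i k 1 1 s t] that by simp
      have "u y (i,1) = dy * X i" "u z (i,1) = dz * X i" using dy dz that by auto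
      then show ?thesis using e unfolding r_def X_def by (simp add: algebra_simps)
    qed
    define zz where "zz s t i = u x (i,2) * wl x (L s t) + ey * u y (i,2) * wl y (L s t)
        + ez * u z (i,2) * wl z (L s t)" for s t i
    have B2: "L s t (k,i) = Y k * zz s t i" if "i \<in> {1,2}" "k \<in> {1,2}" for s t i k
    proof -
      have e: "u x (i,2) * v x (2,k) * wl x (L s t) + u y (i,2) * v y (2,k) * wl y (L s t)
          + u z (i,2) * v z (2,k) * wl z (L s t) = blk 2 (L s t) i k"
        using K3[of i k 2 2 s t] that by simp
      have "v y (2,k) = ey * Y k" "v z (2,k) = ez * Y k" using ey ez that by auto
      then show ?thesis using e unfolding zz_def Y_def blk_def by (simp add: algebra_simps)
    qed
    define z1 where "z1 i = zz 1 0 i" for i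
    define z2 where "z2 i = zz 0 1 i" for i
    have Lst: "L s t (k,i) = Y k * (s * z1 i + t * z2 i)" if "i \<in> {1,2}" "k \<in> {1,2}" for s t i k
    proof -
      have "L s t (k,i) = s * M1 (k,i) + t * M2 (k,i)" unfolding L_def by simp
      also have "\<dots> = s * L 1 0 (k,i) + t * L 0 1 (k,i)" using L10 by simp
      also have "\<dots> = Y k * (s * z1 i + t * z2 i)" using B2[OF that] unfolding z1_def z2_def
        by (simp add: algebra_simps)
      finally show ?thesis .
    qed
    have Dz: "z1 1 * z2 2 - z2 1 * z1 2 \<noteq> 0"
    proof
      assume "z1 1 * z2 2 - z2 1 * z1 2 = 0"
      then obtain s t where st: "s \<noteq> 0 \<or> t \<noteq> 0" "s * z1 1 + t * z2 1 = 0" "s * z1 2 + t * z2 2 = 0"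
        using sing2 by blast
      have "\<forall>c\<in>idx2. s * M1 c + t * M2 c = 0"
      proof
        fix c assume "c \<in> idx2"
        then obtain k i where c: "c = (k,i)" "i \<in> {1,2}" "k \<in> {1,2}" by (auto simp: idx2_def)
        have "s * M1 c + t * M2 c = L s t (k,i)" unfolding L_def c by simp
        also have "\<dots> = 0" using Lst[OF c(2,3)] st c(2) by auto
        finally show "s * M1 c + t * M2 c = 0" .
      qed
      then show False using ind st(1) by blast
    qed
    define D where "D = z1 1 * z2 2 - z2 1 * z1 2"
    have Dnz: "D \<noteq> 0" using Dz unfolding D_def .
    define s0 where "s0 = - z2 1 / D"
    define t0 where "t0 = z1 1 / D"
    have c01: "s0 * z1 1 + t0 * z2 1 = 0" "s0 * z1 2 + t0 * z2 2 = 1"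
      unfolding s0_def t0_def using cramer2[OF D_def Dnz] by simp_all
    have N1: "L s0 t0 (k,1) = 0" "L s0 t0 (k,2) = Y k" if "k \<in> {1,2}" for k
      using Lst[of 1 k s0 t0] Lst[of 2 k s0 t0] c01 that by auto
    have X1r: "X 1 * r s0 t0 k = 0" if "k \<in> {1,2}" for k
    proof -
      have "blk 1 (L s0 t0) 1 k = 0" using N1[OF that] N1[of 1] by (simp add: blk_def)
      then show ?thesis using B1[of 1 k s0 t0] that by simp
    qed
    have X2r: "X 2 * r s0 t0 k = Y k" if "k \<in> {1,2}" for k
    proof -
      have "blk 1 (L s0 t0) 2 k = Y k" using N1[OF that] by (simp add: blk_def)
      then show ?thesis using B1[of 2 k s0 t0] that by simp
    qed
    have "Y k0 \<noteq> 0" using ik0 unfolding Y_def by simp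
    then have "X 2 * r s0 t0 k0 \<noteq> 0" using X2r[OF ik0(2)] by simp
    then have X2: "X 2 \<noteq> 0" and rk0: "r s0 t0 k0 \<noteq> 0" by auto
    have X1: "X 1 = 0" using X1r[OF ik0(2)] rk0 by simp
    define s1 where "s1 = z2 2 / D"
    define t1 where "t1 = - z1 2 / D"
    have c10: "s1 * z1 1 + t1 * z2 1 = 1" "s1 * z1 2 + t1 * z2 2 = 0"
      unfolding s1_def t1_def using cramer2[OF D_def Dnz] by simp_all
    have N2: "L s1 t1 (k,1) = Y k" "L s1 t1 (k,2) = 0" if "k \<in> {1,2}" for k
      using Lst[of 1 k s1 t1] Lst[of 2 k s1 t1] c10 that by auto
    have r1: "r s1 t1 k = 0" if "k \<in> {1,2}" for k
    proof -
      have "blk 1 (L s1 t1) 2 k = 0" using N2[OF that] by (simp add: blk_def)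
      then show ?thesis using B1[of 2 k s1 t1] that X2 by simp
    qed
    have "blk 1 (L s1 t1) 1 2 = 0" using B1[of 1 2 s1 t1] r1[of 2] by simp
    then have Y2: "Y 2 = 0" using N2[of 2] by (simp add: blk_def)
    have "blk 1 (L s1 t1) 1 1 = 0" using B1[of 1 1 s1 t1] r1[of 1] by simp
    then have "q * Y 1 = 0" using N2[of 1] by (simp add: blk_def algebra_simps)
    then have "Y 1 = 0" using qnz by simp
    then show False using Y2 \<open>Y k0 \<noteq> 0\<close> ik0(2) by auto
  next
    case notgamma: False
    show False
    proof (cases "\<exists>i0\<in>{1,2}. \<exists>k0\<in>{1,2}. u x (i0,2) * v x (1,k0) \<noteq> 0")
      case True
      then obtain i0 k0 where ik0: "i0 \<in> {1,2}" "k0 \<in> {1,2}" "u x (i0,2) \<noteq> 0" "v x (1,k0) \<noteq> 0"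
        by auto
      define U where "U i = u x (i,2)" for i
      define V where "V k = v x (1,k)" for k
      have parl: "(\<exists>d. \<forall>i\<in>{1,2}. u l (i,2) = d * U i) \<and> (\<exists>e. \<forall>k\<in>{1,2}. v l (1,k) = e * V k)"
        if "l = y \<or> l = z" for l
      proof -
        have eq: "\<forall>i\<in>{1,2}. \<forall>k\<in>{1,2}. u l (i,2) * v l (1,k) = (if l = y then ky else kz) * (U i * V k)"
          using propor[of _ _ 2 1] that xyz unfolding U_def V_def by auto
        have "(if l = y then ky else kz) \<noteq> 0" using kynz kznz by simp
        then show ?thesis using par2[OF eq _ ik0(1,2)] ik0 unfolding U_def V_def by auto
      qed
      obtain dy ey where dy: "\<forall>i\<in>{1,2}. u y (i,2) = dy * U i" and ey: "\<forall>k\<in>{1,2}. v y (1,k) = ey * V k"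
        using parl[of y] by auto
      obtain dz ez where dz: "\<forall>i\<in>{1,2}. u z (i,2) = dz * U i" and ez: "\<forall>k\<in>{1,2}. v z (1,k) = ez * V k"
        using parl[of z] by auto
      define rho where "rho s t k = v x (2,k) * wl x (L s t) + dy * v y (2,k) * wl y (L s t)
          + dz * v z (2,k) * wl z (L s t)" for s t k
      have B2: "L s t (k,i) = U i * rho s t k" if "i \<in> {1,2}" "k \<in> {1,2}" for s t i k
      proof -
        have e: "u x (i,2) * v x (2,k) * wl x (L s t) + u y (i,2) * v y (2,k) * wl y (L s t)
            + u z (i,2) * v z (2,k) * wl z (L s t) = blk 2 (L s t) i k"
          using K3[of i k 2 2 s t] that by simp
        have "u y (i,2) = dy * U i" "u z (i,2) = dz * U i" using dy dz that by auto
        then show ?thesis using e unfolding rho_def U_def blk_def by (simp add: algebra_simps)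
      qed
      define sg where "sg s t i = u x (i,1) * wl x (L s t) + ey * u y (i,1) * wl y (L s t)
          + ez * u z (i,1) * wl z (L s t)" for s t i
      have B1: "blk 1 (L s t) i k = V k * sg s t i" if "i \<in> {1,2}" "k \<in> {1,2}" for s t i k
      proof -
        have e: "u x (i,1) * v x (1,k) * wl x (L s t) + u y (i,1) * v y (1,k) * wl y (L s t)
            + u z (i,1) * v z (1,k) * wl z (L s t) = blk 1 (L s t) i k"
          using K3[of i k 1 1 s t] that by simp
        have "v y (1,k) = ey * V k" "v z (1,k) = ez * V k" using ey ez that by auto
        then show ?thesis using e unfolding sg_def V_def by (simp add: algebra_simps)
      qed
      define r1 where "r1 k = rho 1 0 k" for k
      define r2 where "r2 k = rho 0 1 k" for k
      have Lst: "L s t (k,i) = U i * (s * r1 k + t * r2 k)" if "i \<in> {1,2}" "k \<in> {1,2}" for s t i k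
      proof -
        have "L s t (k,i) = s * M1 (k,i) + t * M2 (k,i)" unfolding L_def by simp
        also have "\<dots> = s * L 1 0 (k,i) + t * L 0 1 (k,i)" using L10 by simp
        also have "\<dots> = U i * (s * r1 k + t * r2 k)" using B2[OF that] unfolding r1_def r2_def
          by (simp add: algebra_simps)
        finally show ?thesis .
      qed
      have Dr: "r1 1 * r2 2 - r2 1 * r1 2 \<noteq> 0"
      proof
        assume "r1 1 * r2 2 - r2 1 * r1 2 = 0"
        then obtain s t where st: "s \<noteq> 0 \<or> t \<noteq> 0" "s * r1 1 + t * r2 1 = 0" "s * r1 2 + t * r2 2 = 0"
          using sing2 by blast
        have "\<forall>c\<in>idx2. s * M1 c + t * M2 c = 0"
        proof
          fix c assume "c \<in> idx2"
          then obtain k i where c: "c = (k,i)" "i \<in> {1,2}" "k \<in> {1,2}" by (auto simp: idx2_def)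
          have "s * M1 c + t * M2 c = L s t (k,i)" unfolding L_def c by simp
          also have "\<dots> = 0" using Lst[OF c(2,3)] st c(3) by auto
          finally show "s * M1 c + t * M2 c = 0" .
        qed
        then show False using ind st(1) by blast
      qed
      define D where "D = r1 1 * r2 2 - r2 1 * r1 2"
      have Dnz: "D \<noteq> 0" using Dr unfolding D_def .
      define s0 where "s0 = - r2 1 / D"
      define t0 where "t0 = r1 1 / D"
      have c01: "s0 * r1 1 + t0 * r2 1 = 0" "s0 * r1 2 + t0 * r2 2 = 1"
        unfolding s0_def t0_def using cramer2[OF D_def Dnz] by simp_all
      have N1: "L s0 t0 (1,i) = 0" "L s0 t0 (2,i) = U i" if "i \<in> {1,2}" for i
        using Lst[of i 1 s0 t0] Lst[of i 2 s0 t0] c01 that by auto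
      have V1s: "V 1 * sg s0 t0 i = 0" if "i \<in> {1,2}" for i
      proof -
        have "blk 1 (L s0 t0) i 1 = 0" using N1[OF that] N1[of 1] by (simp add: blk_def)
        then show ?thesis using B1[of i 1 s0 t0] that by simp
      qed
      have V2s: "V 2 * sg s0 t0 i = U i" if "i \<in> {1,2}" for i
      proof -
        have "blk 1 (L s0 t0) i 2 = U i" using N1[OF that] by (simp add: blk_def)
        then show ?thesis using B1[of i 2 s0 t0] that by simp
      qed
      have "U i0 \<noteq> 0" using ik0 unfolding U_def by simp
      then have "V 2 * sg s0 t0 i0 \<noteq> 0" using V2s[OF ik0(1)] by simp
      then have V2: "V 2 \<noteq> 0" and si0: "sg s0 t0 i0 \<noteq> 0" by auto
      define s1 where "s1 = r2 2 / D"
      define t1 where "t1 = - r1 2 / D"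
      have c10: "s1 * r1 1 + t1 * r2 1 = 1" "s1 * r1 2 + t1 * r2 2 = 0"
        unfolding s1_def t1_def using cramer2[OF D_def Dnz] by simp_all
      have N2: "L s1 t1 (1,i) = U i" "L s1 t1 (2,i) = 0" if "i \<in> {1,2}" for i
        using Lst[of i 1 s1 t1] Lst[of i 2 s1 t1] c10 that by auto
      have sg1: "sg s1 t1 i = 0" if "i \<in> {1,2}" for i
      proof -
        have "blk 1 (L s1 t1) i 2 = 0" using N2[OF that] by (simp add: blk_def)
        then show ?thesis using B1[of i 2 s1 t1] that V2 by simp
      qed
      have "blk 1 (L s1 t1) 2 1 = 0" using B1[of 2 1 s1 t1] sg1[of 2] by simp
      then have U2: "U 2 = 0" using N2[of 2] by (simp add: blk_def)
      have "blk 1 (L s1 t1) 1 1 = 0" using B1[of 1 1 s1 t1] sg1[of 1] by simp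
      then have "q * U 1 = 0" using N2[of 1] by (simp add: blk_def algebra_simps)
      then have "U 1 = 0" using qnz by simp
      then show False using U2 \<open>U i0 \<noteq> 0\<close> ik0(1) by auto
    next
      case notdelta: False
      have Q1: "u l (i,1) * v l (2,k) = 0" if "l \<in> {x,y,z}" "i \<in> {1,2}" "k \<in> {1,2}" for l i k
      proof -
        have "u x (i,1) * v x (2,k) = 0" using notgamma that by auto
        then show ?thesis using propor[of i k 1 2] that by auto
      qed
      have Q2: "u l (i,2) * v l (1,k) = 0" if "l \<in> {x,y,z}" "i \<in> {1,2}" "k \<in> {1,2}" for l i k
      proof -
        have "u x (i,2) * v x (1,k) = 0" using notdelta that by auto
        then show ?thesis using propor[of i k 2 1] that by auto
      qed
      define act1 where "act1 l \<longleftrightarrow> (\<exists>i\<in>{1,2}. u l (i,1) \<noteq> 0) \<and> (\<exists>k\<in>{1,2}. v l (1,k) \<noteq> 0)" for l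
      define act2 where "act2 l \<longleftrightarrow> (\<exists>i\<in>{1,2}. u l (i,2) \<noteq> 0) \<and> (\<exists>k\<in>{1,2}. v l (2,k) \<noteq> 0)" for l
      have nb: "\<not> (act1 l \<and> act2 l)" if "l \<in> {x,y,z}" for l
      proof
        assume "act1 l \<and> act2 l"
        then obtain i k where "i \<in> {1,2}" "k \<in> {1,2}" "u l (i,1) \<noteq> 0" "v l (2,k) \<noteq> 0"
          unfolding act1_def act2_def by blast
        then show False using Q1[OF that] by fastforce
      qed
      have B2f: False if f: "f \<in> {x,y,z}" "\<forall>l\<in>{x,y,z}. l \<noteq> f \<longrightarrow> \<not> act2 l" for f
      proof -
        have Mf: "L s t (k,i) = u f (i,2) * v f (2,k) * wl f (L s t)" if "i \<in> {1,2}" "k \<in> {1,2}" for s t i k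
        proof -
          have e: "u x (i,2) * v x (2,k) * wl x (L s t) + u y (i,2) * v y (2,k) * wl y (L s t)
              + u z (i,2) * v z (2,k) * wl z (L s t) = blk 2 (L s t) i k"
            using K3[of i k 2 2 s t] that by simp
          have zl: "u l (i,2) * v l (2,k) = 0" if "l \<in> {x,y,z}" "l \<noteq> f" for l
          proof -
            have "\<not> act2 l" using f(2) that by blast
            then have "(\<forall>i\<in>{1,2}. u l (i,2) = 0) \<or> (\<forall>k\<in>{1,2}. v l (2,k) = 0)"
              unfolding act2_def by blast
            then show ?thesis using \<open>i \<in> {1,2}\<close> \<open>k \<in> {1,2}\<close> by auto
          qed
          have "\<forall>l\<in>{x,y,z}. l \<noteq> f \<longrightarrow> u l (i,2) * v l (2,k) * wl l (L s t) = 0"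
            using zl by simp
          then have "u x (i,2) * v x (2,k) * wl x (L s t) + u y (i,2) * v y (2,k) * wl y (L s t)
              + u z (i,2) * v z (2,k) * wl z (L s t) = u f (i,2) * v f (2,k) * wl f (L s t)"
            using sum3_one[OF f(1) xyz(4-6), of "\<lambda>l. u l (i,2) * v l (2,k) * wl l (L s t)"] by simp
          then show ?thesis using e by (simp add: blk_def)
        qed
        define \<alpha>1 where "\<alpha>1 = wl f M1"
        define \<alpha>2 where "\<alpha>2 = wl f M2"
        have M1f: "M1 (k,i) = u f (i,2) * v f (2,k) * \<alpha>1" if "i \<in> {1,2}" "k \<in> {1,2}" for i k
          using Mf[OF that, of 1 0] unfolding L10 \<alpha>1_def .
        have M2f: "M2 (k,i) = u f (i,2) * v f (2,k) * \<alpha>2" if "i \<in> {1,2}" "k \<in> {1,2}" for i k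
          using Mf[OF that, of 0 1] unfolding L10 \<alpha>2_def .
        have "\<forall>c\<in>idx2. \<alpha>2 * M1 c + (- \<alpha>1) * M2 c = 0"
        proof
          fix c assume "c \<in> idx2"
          then obtain k i where c: "c = (k,i)" "i \<in> {1,2}" "k \<in> {1,2}" by (auto simp: idx2_def)
          show "\<alpha>2 * M1 c + (- \<alpha>1) * M2 c = 0" unfolding c using M1f[OF c(2,3)] M2f[OF c(2,3)]
            by (simp add: algebra_simps)
        qed
        then have "\<alpha>2 = 0 \<and> - \<alpha>1 = 0" by (rule ind)
        then have "\<alpha>1 = 0" by simp
        then have "\<forall>c\<in>idx2. 1 * M1 c + 0 * M2 c = 0"
        proof (intro ballI)
          fix c assume "c \<in> idx2"
          then obtain k i where c: "c = (k,i)" "i \<in> {1,2}" "k \<in> {1,2}" by (auto simp: idx2_def)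
          show "1 * M1 c + 0 * M2 c = 0" using M1f[OF c(2,3)] \<open>\<alpha>1 = 0\<close> c(1) by simp
        qed
        then have "(1::'a) = 0 \<and> (0::'a) = 0" by (rule ind)
        then show False by simp
      qed
      have B1f: False if f: "f \<in> {x,y,z}" "\<forall>l\<in>{x,y,z}. l \<noteq> f \<longrightarrow> \<not> act1 l" for f
      proof -
        have Mf: "blk 1 (L s t) i k = u f (i,1) * v f (1,k) * wl f (L s t)" if "i \<in> {1,2}" "k \<in> {1,2}" for s t i k
        proof -
          have e: "u x (i,1) * v x (1,k) * wl x (L s t) + u y (i,1) * v y (1,k) * wl y (L s t)
              + u z (i,1) * v z (1,k) * wl z (L s t) = blk 1 (L s t) i k"
            using K3[of i k 1 1 s t] that by simp
          have zl: "u l (i,1) * v l (1,k) = 0" if "l \<in> {x,y,z}" "l \<noteq> f" for l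
          proof -
            have "\<not> act1 l" using f(2) that by blast
            then have "(\<forall>i\<in>{1,2}. u l (i,1) = 0) \<or> (\<forall>k\<in>{1,2}. v l (1,k) = 0)"
              unfolding act1_def by blast
            then show ?thesis using \<open>i \<in> {1,2}\<close> \<open>k \<in> {1,2}\<close> by auto
          qed
          have "\<forall>l\<in>{x,y,z}. l \<noteq> f \<longrightarrow> u l (i,1) * v l (1,k) * wl l (L s t) = 0"
            using zl by simp
          then have "u x (i,1) * v x (1,k) * wl x (L s t) + u y (i,1) * v y (1,k) * wl y (L s t)
              + u z (i,1) * v z (1,k) * wl z (L s t) = u f (i,1) * v f (1,k) * wl f (L s t)"
            using sum3_one[OF f(1) xyz(4-6), of "\<lambda>l. u l (i,1) * v l (1,k) * wl l (L s t)"] by simp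
          then show ?thesis using e by simp
        qed
        define \<alpha>1 where "\<alpha>1 = wl f M1"
        define \<alpha>2 where "\<alpha>2 = wl f M2"
        have M1f: "blk 1 M1 i k = u f (i,1) * v f (1,k) * \<alpha>1" if "i \<in> {1,2}" "k \<in> {1,2}" for i k
          using Mf[OF that, of 1 0] unfolding L10 \<alpha>1_def .
        have M2f: "blk 1 M2 i k = u f (i,1) * v f (1,k) * \<alpha>2" if "i \<in> {1,2}" "k \<in> {1,2}" for i k
          using Mf[OF that, of 0 1] unfolding L10 \<alpha>2_def .
        have "\<forall>i\<in>{1,2}. \<forall>k\<in>{1,2}. blk 1 (\<lambda>c. \<alpha>2 * M1 c + (- \<alpha>1) * M2 c) i k = 0"
        proof (intro ballI)
          fix i k :: nat assume ik: "i \<in> {1,2}" "k \<in> {1,2}"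
          have "blk 1 (\<lambda>c. \<alpha>2 * M1 c + (- \<alpha>1) * M2 c) i k = \<alpha>2 * blk 1 M1 i k + (- \<alpha>1) * blk 1 M2 i k"
            by (rule blk_lin)
          also have "\<dots> = 0" using M1f[OF ik] M2f[OF ik] by (simp add: algebra_simps)
          finally show "blk 1 (\<lambda>c. \<alpha>2 * M1 c + (- \<alpha>1) * M2 c) i k = 0" .
        qed
        then have "\<forall>c\<in>idx2. \<alpha>2 * M1 c + (- \<alpha>1) * M2 c = 0" by (rule blk1_inj)
        then have "\<alpha>2 = 0 \<and> - \<alpha>1 = 0" by (rule ind)
        then have "\<alpha>1 = 0" by simp
        then have "\<forall>i\<in>{1,2}. \<forall>k\<in>{1,2}. blk 1 M1 i k = 0" using M1f by simp
        then have "\<forall>c\<in>idx2. M1 c = 0" by (rule blk1_inj)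
        then have "\<forall>c\<in>idx2. 1 * M1 c + 0 * M2 c = 0" by simp
        then have "(1::'a) = 0 \<and> (0::'a) = 0" by (rule ind)
        then show False by simp
      qed
      have "act2 y \<or> act2 z" using B2f[of x] xyz by auto
      moreover have "act2 x \<or> act2 z" using B2f[of y] xyz by auto
      moreover have "act2 x \<or> act2 y" using B2f[of z] xyz by auto
      moreover have "act1 y \<or> act1 z" using B1f[of x] xyz by auto
      moreover have "act1 x \<or> act1 z" using B1f[of y] xyz by auto
      moreover have "act1 x \<or> act1 y" using B1f[of z] xyz by auto
      ultimately show False using nb[of x] nb[of y] nb[of z] by blast
    qed
  qed
qed

end

lemma extend3:
  assumes "A \<subseteq> {..<(6::nat)}" "card A \<le> 3"
  shows "\<exists>x y z. x < 6 \<and> y < 6 \<and> z < 6 \<and> x \<noteq> y \<and> y \<noteq> z \<and> x \<noteq> z \<and> A \<subseteq> {x,y,z}"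
proof -
  have fA: "finite A" using assms(1) finite_subset by blast
  have "card ({..<(6::nat)} - A) = card {..<(6::nat)} - card A" by (rule card_Diff_subset[OF fA assms(1)])
  then have "card ({..<(6::nat)} - A) = 6 - card A" by simp
  then have "3 - card A \<le> card ({..<(6::nat)} - A)" by simp
  then obtain C where C: "C \<subseteq> {..<6} - A" "card C = 3 - card A" "finite C"
    by (rule obtain_subset_with_card_n)
  have "A \<inter> C = {}" using C(1) by blast
  then have "card (A \<union> C) = card A + card C" using fA C(3) by (simp add: card_Un_disjoint)
  then have "card (A \<union> C) = 3" using C(2) assms(2) by simp
  then obtain x y z where xyz: "A \<union> C = {x,y,z}" "x \<noteq> y" "y \<noteq> z" "x \<noteq> z"
    unfolding card_3_iff by blast
  have "{x,y,z} \<subseteq> {..<6}" using xyz(1) C(1) assms(1) by blast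
  then have "x < 6" "y < 6" "z < 6" by auto
  moreover have "A \<subseteq> {x,y,z}" using xyz(1) by blast
  ultimately show ?thesis using xyz by blast
qed

context dec6 begin

definition indepS :: "nat set \<Rightarrow> bool" where
  "indepS A \<longleftrightarrow> (\<forall>lam. (\<forall>c\<in>idx2. (\<Sum>l\<in>A. lam l * w l c) = 0) \<longrightarrow> (\<forall>l\<in>A. lam l = 0))"

lemma wl_comb:
  "(\<Sum>c\<in>idx2. (la * w a c + lb * w b c + lc * w d c) * M c) = la * wl a M + lb * wl b M + lc * wl d M"
  unfolding wl_def by (simp add: sum.distrib sum_distrib_left algebra_simps)

lemma two_kernel:
  fixes f1 f2 :: "nat \<times> nat \<Rightarrow> 'a"
  shows "\<exists>M1 M2. (\<forall>s t. (\<forall>c\<in>idx2. s * M1 c + t * M2 c = 0) \<longrightarrow> s = 0 \<and> t = 0) \<and>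
     (\<Sum>c\<in>idx2. f1 c * M1 c) = 0 \<and> (\<Sum>c\<in>idx2. f2 c * M1 c) = 0 \<and>
     (\<Sum>c\<in>idx2. f1 c * M2 c) = 0 \<and> (\<Sum>c\<in>idx2. f2 c * M2 c) = 0"
proof -
  obtain M1 where M1: "\<exists>c\<in>idx2. M1 c \<noteq> 0" "(\<Sum>c\<in>idx2. f1 c * M1 c) = 0" "(\<Sum>c\<in>idx2. f2 c * M1 c) = 0"
    using ker3[of f1 f2 f1] by blast
  obtain c0 where c0: "c0 \<in> idx2" "M1 c0 \<noteq> 0" using M1(1) by blast
  define d where "d c = (if c = c0 then (1::'a) else 0)" for c
  have fin: "finite idx2" by (simp add: idx2_def)
  have dsum: "(\<Sum>c\<in>idx2. d c * M c) = M c0" for M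
  proof -
    have "(\<Sum>c\<in>idx2. d c * M c) = (\<Sum>c\<in>idx2. if c = c0 then M c else 0)"
      by (rule sum.cong) (auto simp: d_def)
    also have "\<dots> = M c0" using c0(1) fin by (simp add: sum.delta)
    finally show ?thesis .
  qed
  obtain M2 where M2: "\<exists>c\<in>idx2. M2 c \<noteq> 0" "(\<Sum>c\<in>idx2. f1 c * M2 c) = 0"
      "(\<Sum>c\<in>idx2. f2 c * M2 c) = 0" "(\<Sum>c\<in>idx2. d c * M2 c) = 0"
    using ker3[of f1 f2 d] by blast
  have M2c0: "M2 c0 = 0" using M2(4) dsum by simp
  have "s = 0 \<and> t = 0" if "\<forall>c\<in>idx2. s * M1 c + t * M2 c = 0" for s t
  proof -
    have "s * M1 c0 = 0" using that c0(1) M2c0 by auto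
    then have s: "s = 0" using c0(2) by simp
    obtain c1 where "c1 \<in> idx2" "M2 c1 \<noteq> 0" using M2(1) by blast
    then have "t = 0" using that s by auto
    then show ?thesis using s by simp
  qed
  then show ?thesis using M1 M2 by blast
qed

lemma dep_False:
  assumes abc: "a < 6" "b < 6" "c < 6" "a \<noteq> b" "b \<noteq> c" "a \<noteq> c"
    and rel: "\<forall>c'\<in>idx2. la * w a c' + lb * w b c' + lc * w c c' = 0" and lc: "lc \<noteq> 0"
  shows False
proof -
  obtain M1 M2 where M0: "\<forall>s t. (\<forall>c\<in>idx2. s * M1 c + t * M2 c = 0) \<longrightarrow> s = 0 \<and> t = 0"
      "(\<Sum>c\<in>idx2. w a c * M1 c) = 0" "(\<Sum>c\<in>idx2. w b c * M1 c) = 0"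
      "(\<Sum>c\<in>idx2. w a c * M2 c) = 0" "(\<Sum>c\<in>idx2. w b c * M2 c) = 0"
    using two_kernel[of "w a" "w b"] by blast
  have M': "wl a M1 = 0" "wl b M1 = 0" "wl a M2 = 0" "wl b M2 = 0"
    unfolding wl_def using M0(2-5) by simp_all
  note M = M0(1) M'
  have wc: "wl c M = 0" if "wl a M = 0" "wl b M = 0" for M
  proof -
    have "(\<Sum>c'\<in>idx2. (la * w a c' + lb * w b c' + lc * w c c') * M c') = 0" using rel by simp
    then have "la * wl a M + lb * wl b M + lc * wl c M = 0" unfolding wl_comb .
    then show ?thesis using that lc by simp
  qed
  have "card ({..<(6::nat)} - {a,b,c}) = card {..<(6::nat)} - card {a,b,c}"
    by (rule card_Diff_subset) (use abc in auto)
  also have "\<dots> = 3" using abc by simp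
  finally have "card ({..<(6::nat)} - {a,b,c}) = 3" .
  then obtain x y z where xyz: "{..<(6::nat)} - {a,b,c} = {x,y,z}" "x \<noteq> y" "y \<noteq> z" "x \<noteq> z"
    unfolding card_3_iff by blast
  have xyz6: "x < 6" "y < 6" "z < 6" using xyz(1) by blast+
  have dead: "\<forall>l<6. l \<noteq> x \<and> l \<noteq> y \<and> l \<noteq> z \<longrightarrow> wl l M1 = 0 \<and> wl l M2 = 0"
  proof (intro allI impI)
    fix l assume l: "l < (6::nat)" "l \<noteq> x \<and> l \<noteq> y \<and> l \<noteq> z"
    then have "l \<in> {a,b,c}" using xyz(1) by blast
    moreover have "wl c M1 = 0" using wc M(2,3) by blast
    moreover have "wl c M2 = 0" using wc M(4,5) by blast
    ultimately show "wl l M1 = 0 \<and> wl l M2 = 0" using M(2-5) by auto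
  qed
  have ind: "\<And>s t. \<forall>c\<in>idx2. s * M1 c + t * M2 c = 0 \<Longrightarrow> s = 0 \<and> t = 0" using M(1) by blast
  show False by (rule lemmaA[OF ind xyz6 xyz(2-4) dead])
qed

lemma indep3:
  assumes abc: "a < 6" "b < 6" "c < 6" "a \<noteq> b" "b \<noteq> c" "a \<noteq> c"
    and rel: "\<forall>c'\<in>idx2. la * w a c' + lb * w b c' + lc * w c c' = 0"
  shows "la = 0 \<and> lb = 0 \<and> lc = 0"
proof -
  have "lc = 0" using dep_False[OF abc rel] by blast
  moreover have "lb = 0"
  proof (rule ccontr)
    assume "lb \<noteq> 0"
    have "\<forall>c'\<in>idx2. la * w a c' + lc * w c c' + lb * w b c' = 0" using rel by (simp add: algebra_simps)
    then show False using dep_False[of a c b la lc lb] abc \<open>lb \<noteq> 0\<close> by auto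
  qed
  moreover have "la = 0"
  proof (rule ccontr)
    assume "la \<noteq> 0"
    have "\<forall>c'\<in>idx2. lb * w b c' + lc * w c c' + la * w a c' = 0" using rel by (simp add: algebra_simps)
    then show False using dep_False[of b c a lb lc la] abc \<open>la \<noteq> 0\<close> by auto
  qed
  ultimately show ?thesis by simp
qed

lemma indep_le3:
  assumes "A \<subseteq> {..<6}" "card A \<le> 3"
  shows "indepS A"
  unfolding indepS_def
proof (intro allI impI ballI)
  fix lam l assume rel: "\<forall>c\<in>idx2. (\<Sum>l\<in>A. lam l * w l c) = 0" and l: "l \<in> A"
  obtain x y z where xyz: "x < 6" "y < 6" "z < 6" "x \<noteq> y" "y \<noteq> z" "x \<noteq> z" "A \<subseteq> {x,y,z}"
    using extend3[OF assms] by blast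
  define lam' where "lam' l = (if l \<in> A then lam l else 0)" for l
  have "\<forall>c\<in>idx2. lam' x * w x c + lam' y * w y c + lam' z * w z c = 0"
  proof
    fix c assume c: "c \<in> idx2"
    have "(\<Sum>l\<in>{x,y,z}. lam' l * w l c) = (\<Sum>l\<in>A. lam l * w l c)"
      using xyz(7) unfolding lam'_def by (intro sum.mono_neutral_cong_right) auto
    then show "lam' x * w x c + lam' y * w y c + lam' z * w z c = 0" using rel c xyz by (simp add: add_ac)
  qed
  then have "lam' x = 0 \<and> lam' y = 0 \<and> lam' z = 0" using indep3 xyz by blast
  then show "lam l = 0" using l xyz(7) unfolding lam'_def by auto
qed

lemma ker_le3:
  assumes "A \<subseteq> {..<6}" "card A \<le> 3"
  shows "\<exists>M. (\<exists>c\<in>idx2. M c \<noteq> 0) \<and> (\<forall>l\<in>A. wl l M = 0)"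
proof -
  obtain x y z where xyz: "x < 6" "y < 6" "z < 6" "x \<noteq> y" "y \<noteq> z" "x \<noteq> z" "A \<subseteq> {x,y,z}"
    using extend3[OF assms] by blast
  obtain M where "(\<exists>c\<in>idx2. M c \<noteq> 0)" "wl x M = 0" "wl y M = 0" "wl z M = 0"
    using ker3[of "w x" "w y" "w z"] unfolding wl_def by blast
  then show ?thesis using xyz(7) by blast
qed

end

lemma card_le1_sub:
  assumes "finite S" "card S \<le> 1" "S \<subseteq> {..<(6::nat)}"
  shows "\<exists>s<6. \<forall>l\<in>S. l = s"
proof (cases "S = {}")
  case True then show ?thesis by (intro exI[of _ 0]) auto
next
  case False
  then have "card S \<noteq> 0" using assms(1) by simp
  then have "card S = 1" using assms(2) by simp
  then obtain s where "S = {s}" using card_1_singletonE by blast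
  then show ?thesis using assms(3) by auto
qed

lemma card2_gen:
  fixes W :: "nat \<Rightarrow> 'm \<Rightarrow> 'a::field" and A :: "nat \<Rightarrow> nat \<Rightarrow> 'a" and B :: "nat \<Rightarrow> 'a"
    and T :: "'m \<Rightarrow> nat \<Rightarrow> 'a"
  assumes id: "\<And>M i. i \<in> {1,2} \<Longrightarrow> (\<Sum>l<6. W l M * A l i * B l) = T M i"
    and s1: "T M1 1 = 1" "T M1 2 = 0" and s2: "T M2 1 = 0" "T M2 2 = 1"
  shows "2 \<le> card {l. l < 6 \<and> (A l 1 \<noteq> 0 \<or> A l 2 \<noteq> 0) \<and> B l \<noteq> 0}"
proof (rule ccontr)
  define S where "S = {l. l < 6 \<and> (A l 1 \<noteq> 0 \<or> A l 2 \<noteq> 0) \<and> B l \<noteq> 0}"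
  assume "\<not> 2 \<le> card {l. l < 6 \<and> (A l 1 \<noteq> 0 \<or> A l 2 \<noteq> 0) \<and> B l \<noteq> 0}"
  then have "card S \<le> 1" unfolding S_def by simp
  moreover have "finite S" "S \<subseteq> {..<6}" unfolding S_def by auto
  ultimately obtain s where s: "s < 6" "\<forall>l\<in>S. l = s" using card_le1_sub by blast
  have red: "T M i = W s M * A s i * B s" if "i \<in> {1,2}" for M i
  proof -
    have "(\<Sum>l<6. W l M * A l i * B l) = W s M * A s i * B s"
    proof (rule sum6_1[OF s(1)], intro allI impI)
      fix l assume "l < 6" "l \<noteq> s"
      then have "l \<notin> S" using s(2) by blast
      then have "(A l 1 = 0 \<and> A l 2 = 0) \<or> B l = 0" using \<open>l < 6\<close> unfolding S_def by auto
      then show "W l M * A l i * B l = 0" using that by auto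
    qed
    then show ?thesis using id[OF that] by simp
  qed
  have "W s M1 * A s 1 * B s = 1" using red[of 1 M1] s1 by simp
  then have "W s M1 * B s \<noteq> 0" by auto
  moreover have "W s M1 * A s 2 * B s = 0" using red[of 2 M1] s1 by simp
  ultimately have "A s 2 = 0" by (simp add: mult_ac)
  moreover have "W s M2 * A s 2 * B s = 1" using red[of 2 M2] s2 by simp
  ultimately show False by simp
qed

context dec6 begin

definition wit :: "nat \<Rightarrow> nat \<Rightarrow> nat \<Rightarrow> 'a \<Rightarrow> nat \<times> nat \<Rightarrow> 'a" where
  "wit j i0 k0 val = (\<lambda>c. if c = (k0,i0) then (if j = 1 \<and> i0 = 1 \<and> k0 = 1 then val / q else val) else 0)"

lemma blk_wit:
  assumes "i0 \<in> {1,2}" "k0 \<in> {1,2}" "i \<in> {1,2}" "k \<in> {1,2}" "j \<in> {1,2}"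
  shows "blk j (wit j i0 k0 val) i k = (if i = i0 \<and> k = k0 then val else 0)"
proof (cases "j = 1 \<and> i0 = 1 \<and> k0 = 1")
  case True
  have e: "val / q + (q - 1) * (val / q) = val" using qnz by (simp add: field_simps)
  show ?thesis
  proof (cases "i = 1 \<and> k = 1")
    case True2: True
    then show ?thesis using True e unfolding blk_def wit_def by simp
  next
    case False
    then show ?thesis using True unfolding blk_def wit_def by auto
  qed
next
  case False
  have "wit j i0 k0 val (1,1) = 0 \<or> j \<noteq> 1" using False unfolding wit_def by auto
  then have "(if j = 1 \<and> i = 1 \<and> k = 1 then (q - 1) * wit j i0 k0 val (1,1) else 0) = 0" by auto
  then have "blk j (wit j i0 k0 val) i k = wit j i0 k0 val (k,i)" unfolding blk_def by simp
  also have "\<dots> = (if i = i0 \<and> k = k0 then val else 0)" using False unfolding wit_def by auto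
  finally show ?thesis .
qed


definition nz2 :: "(nat \<Rightarrow> 'a) \<Rightarrow> bool" where "nz2 x \<longleftrightarrow> x 1 \<noteq> 0 \<or> x 2 \<noteq> 0"
definition dot2 :: "(nat \<Rightarrow> 'a) \<Rightarrow> (nat \<Rightarrow> 'a) \<Rightarrow> 'a" where "dot2 x y = x 1 * y 1 + x 2 * y 2"

definition P1 where "P1 l = (\<lambda>i. u l (i,1))"
definition P2 where "P2 l = (\<lambda>i. u l (i,2))"
definition G1 where "G1 l = (\<lambda>k. v l (1,k))"
definition G2 where "G2 l = (\<lambda>k. v l (2,k))"

lemma nz2_idx: "nz2 x \<longleftrightarrow> (\<exists>i\<in>{1,2}. x i \<noteq> 0)" unfolding nz2_def by auto

lemma CL1:
  assumes h: "nz2 h"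
  shows "2 \<le> card {l. l < 6 \<and> nz2 (G1 l) \<and> dot2 h (P1 l) \<noteq> 0}"
proof -
  obtain i0 where i0: "i0 \<in> {1,2}" "h i0 \<noteq> 0" using h unfolding nz2_def by auto
  define T where "T M k = h 1 * blk 1 M 1 k + h 2 * blk 1 M 2 k" for M k
  have id: "(\<Sum>l<6. wl l M * v l (1,k) * (h 1 * u l (1,1) + h 2 * u l (2,1))) = T M k"
    if "k \<in> {1,2}" for M k
  proof -
    have "(\<Sum>l<6. wl l M * v l (1,k) * (h 1 * u l (1,1) + h 2 * u l (2,1))) =
          h 1 * (\<Sum>l<6. u l (1,1) * v l (1,k) * wl l M) + h 2 * (\<Sum>l<6. u l (2,1) * v l (1,k) * wl l M)"
      by (simp add: sum.distrib sum_distrib_left algebra_simps)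
    also have "\<dots> = T M k" unfolding T_def using KI[of 1 k 1 1 M] KI[of 2 k 1 1 M] that by simp
    finally show ?thesis .
  qed
  have w1: "T (wit 1 i0 1 (1 / h i0)) 1 = 1" "T (wit 1 i0 1 (1 / h i0)) 2 = 0"
    using i0 unfolding T_def by (auto simp: blk_wit)
  have w2: "T (wit 1 i0 2 (1 / h i0)) 1 = 0" "T (wit 1 i0 2 (1 / h i0)) 2 = 1"
    using i0 unfolding T_def by (auto simp: blk_wit)
  have "2 \<le> card {l. l < 6 \<and> (v l (1,1) \<noteq> 0 \<or> v l (1,2) \<noteq> 0) \<and> h 1 * u l (1,1) + h 2 * u l (2,1) \<noteq> 0}"
    by (rule card2_gen[where W = wl and T = T, OF id w1 w2]) simp
  then show ?thesis unfolding nz2_def dot2_def G1_def P1_def by simp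
qed

lemma CL2:
  assumes h: "nz2 h"
  shows "2 \<le> card {l. l < 6 \<and> nz2 (P2 l) \<and> dot2 (G2 l) h \<noteq> 0}"
proof -
  obtain k0 where k0: "k0 \<in> {1,2}" "h k0 \<noteq> 0" using h unfolding nz2_def by auto
  define T where "T M i = h 1 * blk 2 M i 1 + h 2 * blk 2 M i 2" for M i
  have id: "(\<Sum>l<6. wl l M * u l (i,2) * (v l (2,1) * h 1 + v l (2,2) * h 2)) = T M i"
    if "i \<in> {1,2}" for M i
  proof -
    have "(\<Sum>l<6. wl l M * u l (i,2) * (v l (2,1) * h 1 + v l (2,2) * h 2)) =
          h 1 * (\<Sum>l<6. u l (i,2) * v l (2,1) * wl l M) + h 2 * (\<Sum>l<6. u l (i,2) * v l (2,2) * wl l M)"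
      by (simp add: sum.distrib sum_distrib_left algebra_simps)
    also have "\<dots> = T M i" unfolding T_def using KI[of i 1 2 2 M] KI[of i 2 2 2 M] that by simp
    finally show ?thesis .
  qed
  have w1: "T (wit 2 1 k0 (1 / h k0)) 1 = 1" "T (wit 2 1 k0 (1 / h k0)) 2 = 0"
    using k0 unfolding T_def by (auto simp: blk_wit)
  have w2: "T (wit 2 2 k0 (1 / h k0)) 1 = 0" "T (wit 2 2 k0 (1 / h k0)) 2 = 1"
    using k0 unfolding T_def by (auto simp: blk_wit)
  have "2 \<le> card {l. l < 6 \<and> (u l (1,2) \<noteq> 0 \<or> u l (2,2) \<noteq> 0) \<and> v l (2,1) * h 1 + v l (2,2) * h 2 \<noteq> 0}"
    by (rule card2_gen[where W = wl and T = T, OF id w1 w2]) simp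
  then show ?thesis unfolding nz2_def dot2_def G2_def P2_def by simp
qed

lemma CL3:
  assumes h: "nz2 h"
  shows "2 \<le> card {l. l < 6 \<and> nz2 (G2 l) \<and> dot2 h (P2 l) \<noteq> 0}"
proof -
  obtain i0 where i0: "i0 \<in> {1,2}" "h i0 \<noteq> 0" using h unfolding nz2_def by auto
  define T where "T M k = h 1 * blk 2 M 1 k + h 2 * blk 2 M 2 k" for M k
  have id: "(\<Sum>l<6. wl l M * v l (2,k) * (h 1 * u l (1,2) + h 2 * u l (2,2))) = T M k"
    if "k \<in> {1,2}" for M k
  proof -
    have "(\<Sum>l<6. wl l M * v l (2,k) * (h 1 * u l (1,2) + h 2 * u l (2,2))) =
          h 1 * (\<Sum>l<6. u l (1,2) * v l (2,k) * wl l M) + h 2 * (\<Sum>l<6. u l (2,2) * v l (2,k) * wl l M)"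
      by (simp add: sum.distrib sum_distrib_left algebra_simps)
    also have "\<dots> = T M k" unfolding T_def using KI[of 1 k 2 2 M] KI[of 2 k 2 2 M] that by simp
    finally show ?thesis .
  qed
  have w1: "T (wit 2 i0 1 (1 / h i0)) 1 = 1" "T (wit 2 i0 1 (1 / h i0)) 2 = 0"
    using i0 unfolding T_def by (auto simp: blk_wit)
  have w2: "T (wit 2 i0 2 (1 / h i0)) 1 = 0" "T (wit 2 i0 2 (1 / h i0)) 2 = 1"
    using i0 unfolding T_def by (auto simp: blk_wit)
  have "2 \<le> card {l. l < 6 \<and> (v l (2,1) \<noteq> 0 \<or> v l (2,2) \<noteq> 0) \<and> h 1 * u l (1,2) + h 2 * u l (2,2) \<noteq> 0}"
    by (rule card2_gen[where W = wl and T = T, OF id w1 w2]) simp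
  then show ?thesis unfolding nz2_def dot2_def G2_def P2_def by simp
qed

lemma CL4:
  assumes h: "nz2 h"
  shows "2 \<le> card {l. l < 6 \<and> nz2 (P1 l) \<and> dot2 (G1 l) h \<noteq> 0}"
proof -
  obtain k0 where k0: "k0 \<in> {1,2}" "h k0 \<noteq> 0" using h unfolding nz2_def by auto
  define T where "T M i = h 1 * blk 1 M i 1 + h 2 * blk 1 M i 2" for M i
  have id: "(\<Sum>l<6. wl l M * u l (i,1) * (v l (1,1) * h 1 + v l (1,2) * h 2)) = T M i"
    if "i \<in> {1,2}" for M i
  proof -
    have "(\<Sum>l<6. wl l M * u l (i,1) * (v l (1,1) * h 1 + v l (1,2) * h 2)) =
          h 1 * (\<Sum>l<6. u l (i,1) * v l (1,1) * wl l M) + h 2 * (\<Sum>l<6. u l (i,1) * v l (1,2) * wl l M)"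
      by (simp add: sum.distrib sum_distrib_left algebra_simps)
    also have "\<dots> = T M i" unfolding T_def using KI[of i 1 1 1 M] KI[of i 2 1 1 M] that by simp
    finally show ?thesis .
  qed
  have w1: "T (wit 1 1 k0 (1 / h k0)) 1 = 1" "T (wit 1 1 k0 (1 / h k0)) 2 = 0"
    using k0 unfolding T_def by (auto simp: blk_wit)
  have w2: "T (wit 1 2 k0 (1 / h k0)) 1 = 0" "T (wit 1 2 k0 (1 / h k0)) 2 = 1"
    using k0 unfolding T_def by (auto simp: blk_wit)
  have "2 \<le> card {l. l < 6 \<and> (u l (1,1) \<noteq> 0 \<or> u l (2,1) \<noteq> 0) \<and> v l (1,1) * h 1 + v l (1,2) * h 2 \<noteq> 0}"
    by (rule card2_gen[where W = wl and T = T, OF id w1 w2]) simp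
  then show ?thesis unfolding nz2_def dot2_def G1_def P1_def by simp
qed

end

context dec6 begin

lemma wl_delta:
  assumes "c \<in> idx2"
  shows "wl l (\<lambda>c'. if c' = c then 1 else 0) = w l c"
proof -
  have fin: "finite idx2" by (simp add: idx2_def)
  have "wl l (\<lambda>c'. if c' = c then 1 else 0) = (\<Sum>c'\<in>idx2. if c' = c then w l c' else 0)"
    unfolding wl_def by (rule sum.cong) auto
  also have "\<dots> = w l c" using assms fin by (simp add: sum.delta')
  finally show ?thesis .
qed

lemma Xcoord:
  assumes "i \<in> {1,2}" "k \<in> {1,2}" "j \<in> {1,2}" "j' \<in> {1,2}" "j \<noteq> j'" "c \<in> idx2"
  shows "(\<Sum>l<6. u l (i,j) * v l (j',k) * w l c) = 0"
  using KI[OF assms(1-4), of "\<lambda>c'. if c' = c then 1 else 0"] assms(5,6) by (simp add: wl_delta)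

lemma span_lemma:
  assumes B: "B = {b0,b1,b2,b3}" "indepS B" and x: "x \<notin> B"
    and dist: "b0 \<noteq> b1" "b0 \<noteq> b2" "b0 \<noteq> b3" "b1 \<noteq> b2" "b1 \<noteq> b3" "b2 \<noteq> b3"
  shows "\<exists>\<alpha>. \<forall>c\<in>idx2. w x c = (\<Sum>l\<in>B. \<alpha> l * w l c)"
proof -
  define g where "g i = (if i = 0 then w b0 else if i = 1 then w b1 else if i = 2 then w b2 else if i = 3 then w b3 else w x)" for i :: nat
  obtain lam where lam: "\<exists>i<5. lam i \<noteq> 0" "\<forall>c\<in>idx2. (\<Sum>i<5. lam i * g i c) = 0"
    using dep5[of g] by blast
  have s5: "(\<Sum>i<5. lam i * g i c) = lam 0 * w b0 c + lam 1 * w b1 c + lam 2 * w b2 c + lam 3 * w b3 c + lam 4 * w x c" for c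
    by (simp add: g_def eval_nat_numeral)
  define lam' where "lam' l = (if l = b0 then lam 0 else if l = b1 then lam 1 else if l = b2 then lam 2 else lam 3)" for l
  have sB: "(\<Sum>l\<in>B. f l * w l c) = f b0 * w b0 c + f b1 * w b1 c + f b2 * w b2 c + f b3 * w b3 c" for f c
    using dist unfolding B(1) by (simp add: add_ac)
  have sB': "(\<Sum>l\<in>B. lam' l * w l c) = lam 0 * w b0 c + lam 1 * w b1 c + lam 2 * w b2 c + lam 3 * w b3 c" for c
    unfolding sB using dist by (simp add: lam'_def)
  have l4: "lam 4 \<noteq> 0"
  proof
    assume l4: "lam 4 = 0"
    have "\<forall>c\<in>idx2. (\<Sum>l\<in>B. lam' l * w l c) = 0" using lam(2) l4 unfolding sB' s5 by simp
    then have "\<forall>l\<in>B. lam' l = 0" using B(2) unfolding indepS_def by blast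
    then have "lam 0 = 0" "lam 1 = 0" "lam 2 = 0" "lam 3 = 0" using dist unfolding B(1) lam'_def by auto
    then have "\<forall>i<5. lam i = 0" using l4 by (auto simp: less_Suc_eq eval_nat_numeral)
    then show False using lam(1) by blast
  qed
  define \<alpha> where "\<alpha> l = - lam' l / lam 4" for l
  have "\<forall>c\<in>idx2. w x c = (\<Sum>l\<in>B. \<alpha> l * w l c)"
  proof
    fix c assume c: "c \<in> idx2"
    have "(\<Sum>l\<in>B. \<alpha> l * w l c) = - (\<Sum>l\<in>B. lam' l * w l c) / lam 4"
      unfolding \<alpha>_def by (simp add: sum_divide_distrib sum_negf)
    also have "\<dots> = w x c"
    proof -
      have E: "lam 0 * w b0 c + lam 1 * w b1 c + lam 2 * w b2 c + lam 3 * w b3 c + lam 4 * w x c = 0"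
        using lam(2) c unfolding s5 by simp
      then have "lam 0 * w b0 c + lam 1 * w b1 c + lam 2 * w b2 c + lam 3 * w b3 c = - (lam 4 * w x c)"
        by (simp add: eq_neg_iff_add_eq_0)
      then show ?thesis unfolding sB' using l4 by simp
    qed
    finally show "w x c = (\<Sum>l\<in>B. \<alpha> l * w l c)" by simp
  qed
  then show ?thesis by blast
qed

end

locale crossfam = dec6 +
  fixes R C Rx Cx :: "nat \<Rightarrow> nat \<Rightarrow> 'a"
  assumes X: "\<And>i k c. i \<in> {1,2} \<Longrightarrow> k \<in> {1,2} \<Longrightarrow> c \<in> idx2 \<Longrightarrow> (\<Sum>l<6. R l i * C l k * w l c) = 0"
    and H1: "\<And>h. nz2 h \<Longrightarrow> 2 \<le> card {l. l < 6 \<and> nz2 (Cx l) \<and> dot2 h (R l) \<noteq> 0}"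
    and H2: "\<And>h. nz2 h \<Longrightarrow> 2 \<le> card {l. l < 6 \<and> nz2 (Rx l) \<and> dot2 (C l) h \<noteq> 0}"
begin

definition N where "N = {l. l < 6 \<and> nz2 (R l) \<and> nz2 (C l)}"

lemma N_sub: "N \<subseteq> {..<6}" "finite N" unfolding N_def by auto

lemma Q0:
  assumes "l \<notin> N" "l < 6" "i \<in> {1,2}" "k \<in> {1,2}"
  shows "R l i * C l k = 0"
  using assms unfolding N_def nz2_def by auto

lemma XN:
  assumes "i \<in> {1,2}" "k \<in> {1,2}" "c \<in> idx2"
  shows "(\<Sum>l\<in>N. R l i * C l k * w l c) = 0"
proof -
  have "(\<Sum>l<6. R l i * C l k * w l c) = (\<Sum>l\<in>N. R l i * C l k * w l c)"
    by (rule sum.mono_neutral_right) (use N_sub Q0 assms in auto)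
  then show ?thesis using X[OF assms] by simp
qed

lemma nz2_dot: "dot2 h x \<noteq> 0 \<Longrightarrow> nz2 x" "dot2 x h \<noteq> 0 \<Longrightarrow> nz2 x"
  unfolding dot2_def nz2_def by auto

lemma swap_wl: "(\<Sum>c\<in>idx2. (\<Sum>l\<in>A. lam l * w l c) * M c) = (\<Sum>l\<in>A. lam l * wl l M)"
  unfolding wl_def by (simp add: sum_distrib_left sum_distrib_right sum.swap[of _ idx2] mult_ac)

lemma indepS_D:
  assumes "indepS A" "\<forall>c\<in>idx2. (\<Sum>l\<in>A. f l * w l c) = 0" "l \<in> A"
  shows "f l = 0"
  using assms unfolding indepS_def by blast

lemma c4:
  assumes "N \<noteq> {}"
  shows "4 \<le> card N"
proof (rule ccontr)
  assume "\<not> 4 \<le> card N"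
  then have "indepS N" using indep_le3 N_sub by simp
  obtain e where e: "e \<in> N" using assms by blast
  then obtain i0 k0 where ik: "i0 \<in> {1,2}" "k0 \<in> {1,2}" "R e i0 \<noteq> 0" "C e k0 \<noteq> 0"
    unfolding N_def nz2_def by auto
  have "\<forall>c\<in>idx2. (\<Sum>l\<in>N. (R l i0 * C l k0) * w l c) = 0" using XN[OF ik(1,2)] by simp
  then have "R e i0 * C e k0 = 0" using indepS_D[OF \<open>indepS N\<close> _ e, of "\<lambda>l. R l i0 * C l k0"] by simp
  then show False using ik by simp
qed

lemma noprop:
  assumes e: "e \<in> N" and ind: "indepS (N - {e})" and c4: "4 \<le> card N"
  shows False
proof -
  obtain i0 k0 where ik: "i0 \<in> {1,2}" "k0 \<in> {1,2}" "R e i0 \<noteq> 0" "C e k0 \<noteq> 0"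
    using e unfolding N_def nz2_def by auto
  define q0 where "q0 = R e i0 * C e k0"
  have q0: "q0 \<noteq> 0" using ik unfolding q0_def by simp
  have pr: "q0 * (R l i * C l k) = (R e i * C e k) * (R l i0 * C l k0)"
    if l: "l \<in> N - {e}" and i: "i \<in> {1,2}" and k: "k \<in> {1,2}" for l i k
  proof -
    define lam where "lam l = q0 * (R l i * C l k) - (R e i * C e k) * (R l i0 * C l k0)" for l
    have "\<forall>c\<in>idx2. (\<Sum>l\<in>N - {e}. lam l * w l c) = 0"
    proof
      fix c assume c: "c \<in> idx2"
      have lame: "lam e = 0" unfolding lam_def q0_def by (simp add: mult_ac)
      have "(\<Sum>l\<in>N. lam l * w l c) = q0 * (\<Sum>l\<in>N. R l i * C l k * w l c)
          - (R e i * C e k) * (\<Sum>l\<in>N. R l i0 * C l k0 * w l c)"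
        unfolding lam_def by (simp add: sum_distrib_left sum_subtractf algebra_simps)
      also have "\<dots> = 0" using XN[OF i k c] XN[OF ik(1,2) c] by simp
      finally have "(\<Sum>l\<in>N. lam l * w l c) = 0" .
      moreover have "(\<Sum>l\<in>N. lam l * w l c) = lam e * w e c + (\<Sum>l\<in>N - {e}. lam l * w l c)"
        using e N_sub(2) by (simp add: sum.remove)
      ultimately show "(\<Sum>l\<in>N - {e}. lam l * w l c) = 0" using lame by simp
    qed
    then have "lam l = 0" using ind l unfolding indepS_def by blast
    then show ?thesis unfolding lam_def by simp
  qed
  define h where "h j = (if j = 1 then R e 2 else - R e 1)" for j :: nat
  define \<kappa> where "\<kappa> j = (if j = 1 then C e 2 else - C e 1)" for j :: nat
  have nzh: "nz2 h" using ik unfolding h_def nz2_def by auto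
  have nzk: "nz2 \<kappa>" using ik unfolding \<kappa>_def nz2_def by auto
  have he: "dot2 h (R e) = 0" unfolding dot2_def h_def by (simp add: mult_ac)
  have ke: "dot2 (C e) \<kappa> = 0" unfolding dot2_def \<kappa>_def by (simp add: mult_ac)
  have hN: "dot2 h (R l) = 0" if l: "l \<in> N" for l
  proof (cases "l = e")
    case True then show ?thesis using he by simp
  next
    case False
    then have l': "l \<in> N - {e}" using l by simp
    obtain k where k: "k \<in> {1,2}" "C l k \<noteq> 0" using l unfolding N_def nz2_def by auto
    have e1: "q0 * (R l 1 * C l k) = (R e 1 * C e k) * (R l i0 * C l k0)" using pr[OF l' _ k(1), of 1] by simp
    have e2: "q0 * (R l 2 * C l k) = (R e 2 * C e k) * (R l i0 * C l k0)" using pr[OF l' _ k(1), of 2] by simp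
    have "q0 * dot2 h (R l) * C l k = R e 2 * (q0 * (R l 1 * C l k)) - R e 1 * (q0 * (R l 2 * C l k))"
      unfolding dot2_def h_def by (simp add: algebra_simps)
    also have "\<dots> = R e 2 * ((R e 1 * C e k) * (R l i0 * C l k0)) - R e 1 * ((R e 2 * C e k) * (R l i0 * C l k0))"
      unfolding e1 e2 ..
    also have "\<dots> = 0" by (simp add: algebra_simps)
    finally have "q0 * dot2 h (R l) * C l k = 0" .
    then show ?thesis using q0 k by simp
  qed
  have kN: "dot2 (C l) \<kappa> = 0" if l: "l \<in> N" for l
  proof (cases "l = e")
    case True then show ?thesis using ke by simp
  next
    case False
    then have l': "l \<in> N - {e}" using l by simp
    obtain i where i: "i \<in> {1,2}" "R l i \<noteq> 0" using l unfolding N_def nz2_def by auto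
    have e1: "q0 * (R l i * C l 1) = (R e i * C e 1) * (R l i0 * C l k0)" using pr[OF l' i(1), of 1] by simp
    have e2: "q0 * (R l i * C l 2) = (R e i * C e 2) * (R l i0 * C l k0)" using pr[OF l' i(1), of 2] by simp
    have "q0 * R l i * dot2 (C l) \<kappa> = C e 2 * (q0 * (R l i * C l 1)) - C e 1 * (q0 * (R l i * C l 2))"
      unfolding dot2_def \<kappa>_def by (simp add: algebra_simps)
    also have "\<dots> = C e 2 * ((R e i * C e 1) * (R l i0 * C l k0)) - C e 1 * ((R e i * C e 2) * (R l i0 * C l k0))"
      unfolding e1 e2 ..
    also have "\<dots> = 0" by (simp add: algebra_simps)
    finally have "q0 * R l i * dot2 (C l) \<kappa> = 0" .
    then show ?thesis using q0 i by simp
  qed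
  define S1 where "S1 = {l. l < 6 \<and> nz2 (Cx l) \<and> dot2 h (R l) \<noteq> 0}"
  define S2 where "S2 = {l. l < 6 \<and> nz2 (Rx l) \<and> dot2 (C l) \<kappa> \<noteq> 0}"
  have cS1: "2 \<le> card S1" using H1[OF nzh] unfolding S1_def .
  have cS2: "2 \<le> card S2" using H2[OF nzk] unfolding S2_def .
  have d1: "N \<inter> S1 = {}" using hN unfolding S1_def by blast
  have d2: "N \<inter> S2 = {}" using kN unfolding S2_def by blast
  have d3: "S1 \<inter> S2 = {}"
  proof -
    have "l \<in> N" if "l \<in> S1" "l \<in> S2" for l
      using that nz2_dot unfolding S1_def S2_def N_def by blast
    then show ?thesis using d1 by blast
  qed
  have fin: "finite S1" "finite S2" unfolding S1_def S2_def by auto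
  have "card (N \<union> S1 \<union> S2) = card N + card S1 + card S2"
    using d1 d2 d3 fin N_sub(2) by (simp add: card_Un_disjoint Int_Un_distrib2)
  moreover have "N \<union> S1 \<union> S2 \<subseteq> {..<6}" using N_sub unfolding S1_def S2_def by auto
  then have "card (N \<union> S1 \<union> S2) \<le> 6" using card_mono[of "{..<6::nat}"] by fastforce
  ultimately show False using c4 cS1 cS2 by simp
qed


lemma no6:
  assumes c6: "card N = 6"
  shows False
proof -
  have Nall: "N = {..<6}" using c6 N_sub card_subset_eq[of "{..<6::nat}" N] by simp
  have nzR: "nz2 (R l)" "nz2 (C l)" if "l < 6" for l using Nall that unfolding N_def by auto
  obtain M0 where M0a: "\<exists>c\<in>idx2. M0 c \<noteq> 0" "(\<Sum>c\<in>idx2. w 0 c * M0 c) = 0"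
      "(\<Sum>c\<in>idx2. w 1 c * M0 c) = 0" "(\<Sum>c\<in>idx2. w 2 c * M0 c) = 0"
    using ker3[of "w 0" "w 1" "w 2"] by blast
  have M0: "wl 0 M0 = 0" "wl 1 M0 = 0" "wl 2 M0 = 0" unfolding wl_def using M0a(2-4) by simp_all
  obtain d where d: "d < 6" "wl d M0 \<noteq> 0"
  proof -
    have "\<exists>d<6. wl d M0 \<noteq> 0"
    proof (rule ccontr)
      assume "\<not> (\<exists>d<6. wl d M0 \<noteq> 0)"
      then have "\<forall>l<6. l \<noteq> 0 \<longrightarrow> wl l M0 = 0" by auto
      then show False using one_alive_False[OF M0a(1), of 0] by simp
    qed
    then show ?thesis using that by blast
  qed
  have d3: "d \<noteq> 0" "d \<noteq> 1" "d \<noteq> 2"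
  proof -
    show "d \<noteq> 0" proof assume "d = 0" then show False using d(2) M0(1) by simp qed
    show "d \<noteq> 1" proof assume "d = 1" then show False using d(2) M0(2) by simp qed
    show "d \<noteq> 2" proof assume "d = 2" then show False using d(2) M0(3) by simp qed
  qed
  define B where "B = {0::nat,1,2,d}"
  have sB: "(\<Sum>l\<in>B. g l) = g 0 + g 1 + g 2 + g d" for g :: "nat \<Rightarrow> 'a"
    unfolding B_def using d3 by (simp add: add_ac)
  have indB: "indepS B" unfolding indepS_def
  proof (intro allI impI)
    fix lam assume rel: "\<forall>c\<in>idx2. (\<Sum>l\<in>B. lam l * w l c) = 0"
    have "(\<Sum>c\<in>idx2. (\<Sum>l\<in>B. lam l * w l c) * M0 c) = 0"
      by (rule sum.neutral) (use rel in simp)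
    then have "(\<Sum>l\<in>B. lam l * wl l M0) = 0" unfolding swap_wl .
    then have "lam 0 * wl 0 M0 + lam 1 * wl 1 M0 + lam 2 * wl 2 M0 + lam d * wl d M0 = 0"
      unfolding sB .
    then have ld: "lam d = 0" using M0 d by simp
    have "\<forall>c\<in>idx2. lam 0 * w 0 c + lam 1 * w 1 c + lam 2 * w 2 c = 0"
    proof
      fix c assume "c \<in> idx2"
      then have "(\<Sum>l\<in>B. lam l * w l c) = 0" using rel by blast
      then show "lam 0 * w 0 c + lam 1 * w 1 c + lam 2 * w 2 c = 0" using ld unfolding sB by simp
    qed
    then have "lam 0 = 0 \<and> lam 1 = 0 \<and> lam 2 = 0"
      by (rule indep3[of 0 1 2 "lam 0" "lam 1" "lam 2", rotated 6]) simp_all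
    then show "\<forall>l\<in>B. lam l = 0" using ld unfolding B_def by auto
  qed
  have fB: "finite B" "B \<subseteq> {..<6}" unfolding B_def using d by auto
  have cB: "card B = 4" unfolding B_def using d3 by simp
  have "card ({..<(6::nat)} - B) = card {..<(6::nat)} - card B" by (rule card_Diff_subset[OF fB])
  then have "card ({..<(6::nat)} - B) = 2" using cB by simp
  then obtain e f where ef: "{..<(6::nat)} - B = {e,f}" "e \<noteq> f" unfolding card_2_iff by blast
  have efB: "e \<notin> B" "f \<notin> B" "e < 6" "f < 6" using ef(1) by blast+
  have all6: "{..<(6::nat)} = B \<union> {e,f}" using ef(1) fB by blast
  obtain \<alpha>e where \<alpha>e: "\<forall>c\<in>idx2. w e c = (\<Sum>l\<in>B. \<alpha>e l * w l c)"
    using span_lemma[OF B_def indB efB(1)] d3 by auto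
  obtain \<alpha>f where \<alpha>f: "\<forall>c\<in>idx2. w f c = (\<Sum>l\<in>B. \<alpha>f l * w l c)"
    using span_lemma[OF B_def indB efB(2)] d3 by auto
  define Q where "Q l i k = R l i * C l k" for l i k
  have split6: "(\<Sum>l<6. g l) = (\<Sum>l\<in>B. g l) + g e + g f" for g :: "nat \<Rightarrow> 'a"
  proof -
    have "(\<Sum>l<6. g l) = (\<Sum>l\<in>B \<union> {e,f}. g l)" using all6 by simp
    also have "\<dots> = (\<Sum>l\<in>B. g l) + (\<Sum>l\<in>{e,f}. g l)"
      by (rule sum.union_disjoint) (use fB efB in auto)
    also have "\<dots> = (\<Sum>l\<in>B. g l) + g e + g f" using ef(2) by (simp add: add_ac)
    finally show ?thesis .
  qed
  have coefB: "Q l i k + \<alpha>e l * Q e i k + \<alpha>f l * Q f i k = 0"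
    if l: "l \<in> B" and i: "i \<in> {1,2}" and k: "k \<in> {1,2}" for l i k
  proof -
    have "\<forall>c\<in>idx2. (\<Sum>l\<in>B. (Q l i k + \<alpha>e l * Q e i k + \<alpha>f l * Q f i k) * w l c) = 0"
    proof
      fix c assume c: "c \<in> idx2"
      have "(\<Sum>l\<in>B. (Q l i k + \<alpha>e l * Q e i k + \<alpha>f l * Q f i k) * w l c) =
          (\<Sum>l\<in>B. Q l i k * w l c) + Q e i k * (\<Sum>l\<in>B. \<alpha>e l * w l c) + Q f i k * (\<Sum>l\<in>B. \<alpha>f l * w l c)"
        by (simp add: sum.distrib sum_distrib_left algebra_simps)
      also have "\<dots> = (\<Sum>l\<in>B. Q l i k * w l c) + Q e i k * w e c + Q f i k * w f c"
        using \<alpha>e \<alpha>f c by simp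
      also have "\<dots> = (\<Sum>l<6. Q l i k * w l c)" using split6 by simp
      also have "\<dots> = 0" using X[OF i k c] unfolding Q_def .
      finally show "(\<Sum>l\<in>B. (Q l i k + \<alpha>e l * Q e i k + \<alpha>f l * Q f i k) * w l c) = 0" .
    qed
    then show ?thesis using indepS_D[OF indB _ l, of "\<lambda>l. Q l i k + \<alpha>e l * Q e i k + \<alpha>f l * Q f i k"] by simp
  qed
  define a where "a l = (if l = e then 1 else if l = f then 0 else - \<alpha>e l)" for l
  define b where "b l = (if l = e then 0 else if l = f then 1 else - \<alpha>f l)" for l
  have Qab: "Q l i k = a l * Q e i k + b l * Q f i k" if l: "l < 6" and i: "i \<in> {1,2}" and k: "k \<in> {1,2}" for l i k
  proof -
    consider "l = e" | "l = f" | "l \<in> B" using l all6 by blast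
    then show ?thesis
    proof cases
      case 1 then show ?thesis unfolding a_def b_def by simp
    next
      case 2 then show ?thesis using ef(2) unfolding a_def b_def by simp
    next
      case 3
      then have "l \<noteq> e" "l \<noteq> f" using efB by auto
      then show ?thesis using coefB[OF 3 i k] unfolding a_def b_def by (simp add: algebra_simps eq_neg_iff_add_eq_0)
    qed
  qed
  have Qdef: "Q l i k = R l i * C l k" for l i k unfolding Q_def ..
  show False
  proof (cases "R e 1 * R f 2 - R e 2 * R f 1 = 0")
    case True
    define h where "h j = (if j = 1 then R e 2 else - R e 1)" for j :: nat
    have nzh: "nz2 h" using nzR(1)[OF efB(3)] unfolding h_def nz2_def by auto
    have hz: "dot2 h (R l) = 0" if l: "l < 6" for l
    proof -
      obtain k where k: "k \<in> {1,2}" "C l k \<noteq> 0" using nzR(2)[OF l] unfolding nz2_def by auto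
      have "dot2 h (R l) * C l k = h 1 * Q l 1 k + h 2 * Q l 2 k" unfolding dot2_def Qdef by (simp add: algebra_simps)
      also have "\<dots> = h 1 * (a l * Q e 1 k + b l * Q f 1 k) + h 2 * (a l * Q e 2 k + b l * Q f 2 k)"
        using Qab[OF l _ k(1), of 1] Qab[OF l _ k(1), of 2] by simp
      also have "\<dots> = a l * C e k * (R e 2 * R e 1 - R e 1 * R e 2) + b l * C f k * (R e 2 * R f 1 - R e 1 * R f 2)"
        unfolding h_def Qdef by (simp add: algebra_simps)
      also have "\<dots> = 0" using True by (simp add: algebra_simps)
      finally show ?thesis using k by simp
    qed
    have E: "{l. l < 6 \<and> nz2 (Cx l) \<and> dot2 h (R l) \<noteq> 0} = {}" using hz by auto
    have "2 \<le> card {l. l < 6 \<and> nz2 (Cx l) \<and> dot2 h (R l) \<noteq> 0}" using H1[OF nzh] .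
    then show False unfolding E by simp
  next
    case False1: False
    show False
    proof (cases "C e 1 * C f 2 - C e 2 * C f 1 = 0")
      case True
      define h where "h j = (if j = 1 then C e 2 else - C e 1)" for j :: nat
      have nzh: "nz2 h" using nzR(2)[OF efB(3)] unfolding h_def nz2_def by auto
      have hz: "dot2 (C l) h = 0" if l: "l < 6" for l
      proof -
        obtain i where i: "i \<in> {1,2}" "R l i \<noteq> 0" using nzR(1)[OF l] unfolding nz2_def by auto
        have "R l i * dot2 (C l) h = Q l i 1 * h 1 + Q l i 2 * h 2" unfolding dot2_def Qdef by (simp add: algebra_simps)
        also have "\<dots> = (a l * Q e i 1 + b l * Q f i 1) * h 1 + (a l * Q e i 2 + b l * Q f i 2) * h 2"
          using Qab[OF l i(1), of 1] Qab[OF l i(1), of 2] by simp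
        also have "\<dots> = a l * R e i * (C e 1 * C e 2 - C e 2 * C e 1) + b l * R f i * (C f 1 * C e 2 - C f 2 * C e 1)"
          unfolding h_def Qdef by (simp add: algebra_simps)
        also have "\<dots> = 0" using True by (simp add: algebra_simps)
        finally show ?thesis using i by simp
      qed
      have E: "{l. l < 6 \<and> nz2 (Rx l) \<and> dot2 (C l) h \<noteq> 0} = {}" using hz by auto
      have "2 \<le> card {l. l < 6 \<and> nz2 (Rx l) \<and> dot2 (C l) h \<noteq> 0}" using H2[OF nzh] .
      then show False unfolding E by simp
    next
      case False2: False
      have ab0: "a l * b l = 0" if l: "l < 6" for l
      proof -
        have "Q l 1 1 * Q l 2 2 - Q l 1 2 * Q l 2 1 = 0" unfolding Qdef by (simp add: algebra_simps)
        moreover have "Q l 1 1 * Q l 2 2 - Q l 1 2 * Q l 2 1 =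
            (a l * Q e 1 1 + b l * Q f 1 1) * (a l * Q e 2 2 + b l * Q f 2 2)
            - (a l * Q e 1 2 + b l * Q f 1 2) * (a l * Q e 2 1 + b l * Q f 2 1)"
          using Qab[OF l, of 1 1] Qab[OF l, of 2 2] Qab[OF l, of 1 2] Qab[OF l, of 2 1] by simp
        moreover have "(a l * Q e 1 1 + b l * Q f 1 1) * (a l * Q e 2 2 + b l * Q f 2 2)
            - (a l * Q e 1 2 + b l * Q f 1 2) * (a l * Q e 2 1 + b l * Q f 2 1) =
            a l * b l * ((R e 1 * R f 2 - R e 2 * R f 1) * (C e 1 * C f 2 - C e 2 * C f 1))"
          unfolding Qdef by (simp add: algebra_simps)
        ultimately have "a l * b l * ((R e 1 * R f 2 - R e 2 * R f 1) * (C e 1 * C f 2 - C e 2 * C f 1)) = 0"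
          by simp
        then show ?thesis using False1 False2 by simp
      qed
      define Wa where "Wa c = (\<Sum>l<6. a l * w l c)" for c
      define Wb where "Wb c = (\<Sum>l<6. b l * w l c)" for c
      have WQ: "Q e i k * Wa c + Q f i k * Wb c = 0" if i: "i \<in> {1,2}" and k: "k \<in> {1,2}" and c: "c \<in> idx2" for i k c
      proof -
        have "Q e i k * Wa c + Q f i k * Wb c = (\<Sum>l<6. (a l * Q e i k + b l * Q f i k) * w l c)"
          unfolding Wa_def Wb_def by (simp add: sum.distrib sum_distrib_left algebra_simps)
        also have "\<dots> = (\<Sum>l<6. Q l i k * w l c)" using Qab i k by simp
        also have "\<dots> = 0" using X[OF i k c] unfolding Qdef .
        finally show ?thesis .
      qed
      have Wa0: "Wa c = 0" if c: "c \<in> idx2" for c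
      proof (rule ccontr)
        assume wa: "Wa c \<noteq> 0"
        obtain k where k: "k \<in> {1,2}" "C e k \<noteq> 0" using nzR(2)[OF efB(3)] unfolding nz2_def by auto
        define t where "t = - Wb c / Wa c"
        have qe: "Q e i k = t * Q f i k" if i: "i \<in> {1,2}" for i
          using WQ[OF i k(1) c] wa unfolding t_def by (simp add: field_simps eq_neg_iff_add_eq_0)
        have "(R e 1 * R f 2 - R e 2 * R f 1) * C e k = R f 2 * Q e 1 k - R f 1 * Q e 2 k"
          unfolding Qdef by (simp add: algebra_simps)
        also have "\<dots> = R f 2 * (t * Q f 1 k) - R f 1 * (t * Q f 2 k)" using qe[of 1] qe[of 2] by simp
        also have "\<dots> = 0" unfolding Qdef by (simp add: algebra_simps)
        finally show False using False1 k by simp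
      qed
      have Wb0: "Wb c = 0" if c: "c \<in> idx2" for c
      proof -
        obtain i where i: "i \<in> {1,2}" "R f i \<noteq> 0" using nzR(1)[OF efB(4)] unfolding nz2_def by auto
        obtain k where k: "k \<in> {1,2}" "C f k \<noteq> 0" using nzR(2)[OF efB(4)] unfolding nz2_def by auto
        have "Q f i k * Wb c = 0" using WQ[OF i(1) k(1) c] Wa0[OF c] by simp
        then show ?thesis using i k unfolding Qdef by simp
      qed
      define Ge where "Ge = {l. l < 6 \<and> a l \<noteq> 0}"
      define Gf where "Gf = {l. l < 6 \<and> b l \<noteq> 0}"
      have fG: "finite Ge" "finite Gf" "Ge \<subseteq> {..<6}" "Gf \<subseteq> {..<6}" unfolding Ge_def Gf_def by auto
      have eGe: "e \<in> Ge" unfolding Ge_def a_def using efB by simp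
      have fGf: "f \<in> Gf" unfolding Gf_def b_def using efB ef(2) by simp
      have cGe: "4 \<le> card Ge"
      proof (rule ccontr)
        assume "\<not> 4 \<le> card Ge"
        then have ind: "indepS Ge" using indep_le3 fG by simp
        have "\<forall>c\<in>idx2. (\<Sum>l\<in>Ge. a l * w l c) = 0"
        proof
          fix c assume c: "c \<in> idx2"
          have "(\<Sum>l<6. a l * w l c) = (\<Sum>l\<in>Ge. a l * w l c)"
            by (rule sum.mono_neutral_right) (auto simp: Ge_def)
          then show "(\<Sum>l\<in>Ge. a l * w l c) = 0" using Wa0[OF c] unfolding Wa_def by simp
        qed
        then have "a e = 0" using indepS_D[OF ind _ eGe, of a] by simp
        then show False using eGe unfolding Ge_def by simp
      qed
      have cGf: "4 \<le> card Gf"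
      proof (rule ccontr)
        assume "\<not> 4 \<le> card Gf"
        then have ind: "indepS Gf" using indep_le3 fG by simp
        have "\<forall>c\<in>idx2. (\<Sum>l\<in>Gf. b l * w l c) = 0"
        proof
          fix c assume c: "c \<in> idx2"
          have "(\<Sum>l<6. b l * w l c) = (\<Sum>l\<in>Gf. b l * w l c)"
            by (rule sum.mono_neutral_right) (auto simp: Gf_def)
          then show "(\<Sum>l\<in>Gf. b l * w l c) = 0" using Wb0[OF c] unfolding Wb_def by simp
        qed
        then have "b f = 0" using indepS_D[OF ind _ fGf, of b] by simp
        then show False using fGf unfolding Gf_def by simp
      qed
      have "Ge \<inter> Gf = {}" using ab0 unfolding Ge_def Gf_def by auto
      then have "card (Ge \<union> Gf) = card Ge + card Gf" using fG by (simp add: card_Un_disjoint)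
      moreover have "card (Ge \<union> Gf) \<le> 6"
      proof -
        have "card (Ge \<union> Gf) \<le> card {..<(6::nat)}" by (rule card_mono) (use fG in auto)
        then show ?thesis by simp
      qed
      ultimately show False using cGe cGf by simp
    qed
  qed
qed

lemma kernelprop:
  assumes c5: "card N = 5" and dep: "\<forall>e\<in>N. \<not> indepS (N - {e})"
    and abc: "a \<in> N" "b \<in> N" "c \<in> N" "a \<noteq> b" "b \<noteq> c" "a \<noteq> c"
    and M: "wl a M = 0" "wl b M = 0" "wl c M = 0" and l: "l \<in> N"
  shows "wl l M = 0"
proof (cases "l \<in> {a,b,c}")
  case True then show ?thesis using M by auto
next
  case False
  then have lab: "l \<noteq> a" "l \<noteq> b" "l \<noteq> c" by auto
  define S where "S = {a,b,c,l}"
  have SN: "S \<subseteq> N" unfolding S_def using abc l by auto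
  have cS: "card S = 4" unfolding S_def using abc lab by auto
  have "card (N - S) = card N - card S" by (rule card_Diff_subset) (use SN N_sub in \<open>auto simp: S_def\<close>)
  then have "card (N - S) = 1" using c5 cS by simp
  then obtain e where e: "N - S = {e}" using card_1_singletonE by blast
  have eN: "e \<in> N" using e by blast
  have NeS: "N - {e} = S" using e SN by blast
  have "\<not> indepS S" using dep eN NeS by metis
  then obtain lam where rel: "\<forall>c'\<in>idx2. (\<Sum>l'\<in>S. lam l' * w l' c') = 0" and nz: "\<exists>l'\<in>S. lam l' \<noteq> 0"
    unfolding indepS_def by blast
  have sS: "(\<Sum>l'\<in>S. g l') = g a + g b + g c + g l" for g :: "nat \<Rightarrow> 'a"
    unfolding S_def using abc lab by (simp add: add_ac)
  have sixa: "a < 6" "b < 6" "c < 6" using abc N_sub by auto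
  have ll: "lam l \<noteq> 0"
  proof
    assume l0: "lam l = 0"
    have "\<forall>c'\<in>idx2. lam a * w a c' + lam b * w b c' + lam c * w c c' = 0"
    proof
      fix c' assume "c' \<in> idx2"
      then have "(\<Sum>l'\<in>S. lam l' * w l' c') = 0" using rel by blast
      then show "lam a * w a c' + lam b * w b c' + lam c * w c c' = 0" using l0 unfolding sS by simp
    qed
    then have "lam a = 0 \<and> lam b = 0 \<and> lam c = 0"
      by (rule indep3[OF sixa abc(4-6)])
    then show False using nz l0 unfolding S_def by auto
  qed
  have "(\<Sum>c'\<in>idx2. (\<Sum>l'\<in>S. lam l' * w l' c') * M c') = 0"
    by (rule sum.neutral) (use rel in simp)
  then have "(\<Sum>l'\<in>S. lam l' * wl l' M) = 0" unfolding swap_wl .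
  then have "lam l * wl l M = 0" unfolding sS using M by simp
  then show ?thesis using ll by simp
qed

lemma core_main:
  "N = {} \<or> (card N = 5 \<and> (\<forall>a b c M. a \<in> N \<longrightarrow> b \<in> N \<longrightarrow> c \<in> N \<longrightarrow> a \<noteq> b \<longrightarrow> b \<noteq> c \<longrightarrow> a \<noteq> c
     \<longrightarrow> wl a M = 0 \<longrightarrow> wl b M = 0 \<longrightarrow> wl c M = 0 \<longrightarrow> (\<forall>l\<in>N. wl l M = 0)))"
proof (cases "N = {}")
  case True then show ?thesis by simp
next
  case False
  have c4': "4 \<le> card N" using c4[OF False] .
  have "card N \<le> card {..<(6::nat)}" by (rule card_mono) (use N_sub in auto)
  then have c6: "card N \<le> 6" by simp
  have n6: "card N \<noteq> 6" using no6 by blast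
  have dep: "\<forall>e\<in>N. \<not> indepS (N - {e})" using noprop c4' by blast
  have n4: "card N \<noteq> 4"
  proof
    assume c: "card N = 4"
    obtain e where e: "e \<in> N" using False by blast
    have "card (N - {e}) = 3" using c e N_sub by simp
    moreover have "N - {e} \<subseteq> {..<6}" using N_sub by auto
    ultimately have "indepS (N - {e})" using indep_le3[of "N - {e}"] by simp
    then show False using dep e by blast
  qed
  have c5: "card N = 5" using c4' c6 n6 n4 by simp
  show ?thesis using kernelprop[OF c5 dep] c5 by blast
qed
end

context dec6 begin

lemma cf1: "crossfam q u v w P1 G2 P2 G1"
proof -
  have "crossfam_axioms w P1 G2 P2 G1"
  proof (unfold_locales)
    fix i k c assume "i \<in> {1::nat,2}" "k \<in> {1::nat,2}" "c \<in> idx2"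
    then show "(\<Sum>l<6. P1 l i * G2 l k * w l c) = 0"
      using Xcoord[of i k 1 2 c] unfolding P1_def G2_def by simp
  next
    fix h :: "nat \<Rightarrow> 'a" assume "nz2 h"
    then show "2 \<le> card {l. l < 6 \<and> nz2 (G1 l) \<and> dot2 h (P1 l) \<noteq> 0}" by (rule CL1)
  next
    fix h :: "nat \<Rightarrow> 'a" assume "nz2 h"
    then show "2 \<le> card {l. l < 6 \<and> nz2 (P2 l) \<and> dot2 (G2 l) h \<noteq> 0}" by (rule CL2)
  qed
  then show ?thesis by (intro crossfam.intro dec6_axioms)
qed

lemma cf2: "crossfam q u v w P2 G1 P1 G2"
proof -
  have "crossfam_axioms w P2 G1 P1 G2"
  proof (unfold_locales)
    fix i k c assume "i \<in> {1::nat,2}" "k \<in> {1::nat,2}" "c \<in> idx2"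
    then show "(\<Sum>l<6. P2 l i * G1 l k * w l c) = 0"
      using Xcoord[of i k 2 1 c] unfolding P2_def G1_def by simp
  next
    fix h :: "nat \<Rightarrow> 'a" assume "nz2 h"
    then show "2 \<le> card {l. l < 6 \<and> nz2 (G2 l) \<and> dot2 h (P2 l) \<noteq> 0}" by (rule CL3)
  next
    fix h :: "nat \<Rightarrow> 'a" assume "nz2 h"
    then show "2 \<le> card {l. l < 6 \<and> nz2 (P1 l) \<and> dot2 (G1 l) h \<noteq> 0}" by (rule CL4)
  qed
  then show ?thesis by (intro crossfam.intro dec6_axioms)
qed


lemma L1card: "4 \<le> card {l. l < 6 \<and> nz2 (P1 l) \<and> nz2 (G1 l)}"
proof (rule ccontr)
  define L where "L = {l. l < 6 \<and> nz2 (P1 l) \<and> nz2 (G1 l)}"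
  assume "\<not> 4 \<le> card {l. l < 6 \<and> nz2 (P1 l) \<and> nz2 (G1 l)}"
  then have "card L \<le> 3" unfolding L_def by simp
  moreover have "L \<subseteq> {..<6}" unfolding L_def by auto
  ultimately obtain M where M: "\<exists>c\<in>idx2. M c \<noteq> 0" "\<forall>l\<in>L. wl l M = 0" using ker_le3 by blast
  have "\<forall>i\<in>{1,2}. \<forall>k\<in>{1,2}. blk 1 M i k = 0"
  proof (intro ballI)
    fix i k :: nat assume ik: "i \<in> {1,2}" "k \<in> {1,2}"
    have "(\<Sum>l<6. u l (i,1) * v l (1,k) * wl l M) = 0"
    proof (rule sum.neutral, intro ballI)
      fix l assume l: "l \<in> {..<6::nat}"
      show "u l (i,1) * v l (1,k) * wl l M = 0"
      proof (cases "l \<in> L")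
        case True then show ?thesis using M(2) by simp
      next
        case False
        then have "\<not> nz2 (P1 l) \<or> \<not> nz2 (G1 l)" using l unfolding L_def by auto
        then have "u l (i,1) = 0 \<or> v l (1,k) = 0" using ik unfolding nz2_def P1_def G1_def by auto
        then show ?thesis by auto
      qed
    qed
    then show "blk 1 M i k = 0" using KI[OF ik, of 1 1 M] by simp
  qed
  then have "\<forall>c\<in>idx2. M c = 0" by (rule blk1_inj)
  then show False using M(1) by blast
qed

lemma L2card: "4 \<le> card {l. l < 6 \<and> nz2 (P2 l) \<and> nz2 (G2 l)}"
proof (rule ccontr)
  define L where "L = {l. l < 6 \<and> nz2 (P2 l) \<and> nz2 (G2 l)}"
  assume "\<not> 4 \<le> card {l. l < 6 \<and> nz2 (P2 l) \<and> nz2 (G2 l)}"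
  then have "card L \<le> 3" unfolding L_def by simp
  moreover have "L \<subseteq> {..<6}" unfolding L_def by auto
  ultimately obtain M where M: "\<exists>c\<in>idx2. M c \<noteq> 0" "\<forall>l\<in>L. wl l M = 0" using ker_le3 by blast
  have "M (k,i) = 0" if ik: "i \<in> {1,2}" "k \<in> {1,2}" for i k
  proof -
    have "(\<Sum>l<6. u l (i,2) * v l (2,k) * wl l M) = 0"
    proof (rule sum.neutral, intro ballI)
      fix l assume l: "l \<in> {..<6::nat}"
      show "u l (i,2) * v l (2,k) * wl l M = 0"
      proof (cases "l \<in> L")
        case True then show ?thesis using M(2) by simp
      next
        case False
        then have "\<not> nz2 (P2 l) \<or> \<not> nz2 (G2 l)" using l unfolding L_def by auto
        then have "u l (i,2) = 0 \<or> v l (2,k) = 0" using ik unfolding nz2_def P2_def G2_def by auto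
        then show ?thesis by auto
      qed
    qed
    then show "M (k,i) = 0" using KI[OF ik, of 2 2 M] by (simp add: blk_def)
  qed
  then have "\<forall>c\<in>idx2. M c = 0" by (auto simp: idx2_def)
  then show False using M(1) by blast
qed

lemma three_in:
  assumes "finite S" "3 \<le> card S"
  shows "\<exists>a b c. a \<in> S \<and> b \<in> S \<and> c \<in> S \<and> a \<noteq> b \<and> b \<noteq> c \<and> a \<noteq> c"
proof -
  obtain T where T: "T \<subseteq> S" "card T = 3" "finite T" using obtain_subset_with_card_n[OF assms(2)] by blast
  then obtain a b c where "T = {a,b,c}" "a \<noteq> b" "b \<noteq> c" "a \<noteq> c" unfolding card_3_iff by blast
  then show ?thesis using T(1) by blast
qed

theorem final_False: False
proof -
  interpret n1: crossfam q u v w P1 G2 P2 G1 by (rule cf1)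
  interpret n2: crossfam q u v w P2 G1 P1 G2 by (rule cf2)
  define L1 where "L1 = {l. l < 6 \<and> nz2 (P1 l) \<and> nz2 (G1 l)}"
  define L2 where "L2 = {l. l < 6 \<and> nz2 (P2 l) \<and> nz2 (G2 l)}"
  have cL: "4 \<le> card L1" "4 \<le> card L2" using L1card L2card unfolding L1_def L2_def by auto
  have fL: "finite L1" "finite L2" "L1 \<union> L2 \<subseteq> {..<6}" unfolding L1_def L2_def by auto
  have cU: "card (L1 \<union> L2) \<le> 6"
  proof -
    have "card (L1 \<union> L2) \<le> card {..<(6::nat)}" by (rule card_mono) (use fL in auto)
    then show ?thesis by simp
  qed
  have LI: "L1 \<inter> L2 \<noteq> {}"
  proof
    assume "L1 \<inter> L2 = {}"
    then have "card (L1 \<union> L2) = card L1 + card L2" using fL by (simp add: card_Un_disjoint)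
    then show False using cL cU by simp
  qed
  have N1ne: "n1.N \<noteq> {}" using LI unfolding L1_def L2_def n1.N_def by auto
  have N2ne: "n2.N \<noteq> {}" using LI unfolding L1_def L2_def n2.N_def by auto
  have K1: "card n1.N = 5" "\<And>a b c M. a \<in> n1.N \<Longrightarrow> b \<in> n1.N \<Longrightarrow> c \<in> n1.N \<Longrightarrow> a \<noteq> b \<Longrightarrow> b \<noteq> c \<Longrightarrow> a \<noteq> c
     \<Longrightarrow> wl a M = 0 \<Longrightarrow> wl b M = 0 \<Longrightarrow> wl c M = 0 \<Longrightarrow> (\<forall>l\<in>n1.N. wl l M = 0)"
    using n1.core_main N1ne by blast+
  have K2: "card n2.N = 5" "\<And>a b c M. a \<in> n2.N \<Longrightarrow> b \<in> n2.N \<Longrightarrow> c \<in> n2.N \<Longrightarrow> a \<noteq> b \<Longrightarrow> b \<noteq> c \<Longrightarrow> a \<noteq> c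
     \<Longrightarrow> wl a M = 0 \<Longrightarrow> wl b M = 0 \<Longrightarrow> wl c M = 0 \<Longrightarrow> (\<forall>l\<in>n2.N. wl l M = 0)"
    using n2.core_main N2ne by blast+
  have kill: "\<exists>M. (\<exists>c\<in>idx2. M c \<noteq> 0) \<and> wl a M = 0 \<and> wl b M = 0 \<and> wl c M = 0" for a b c
  proof -
    obtain M where "(\<exists>c\<in>idx2. M c \<noteq> 0)" "(\<Sum>c'\<in>idx2. w a c' * M c') = 0"
        "(\<Sum>c'\<in>idx2. w b c' * M c') = 0" "(\<Sum>c'\<in>idx2. w c c' * M c') = 0"
      using ker3[of "w a" "w b" "w c"] by blast
    then show ?thesis unfolding wl_def by blast
  qed
  show False
  proof (cases "n1.N = n2.N")
    case True
    have "card ({..<(6::nat)} - n1.N) = card {..<(6::nat)} - card n1.N"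
      by (rule card_Diff_subset) (use n1.N_sub in auto)
    then have "card ({..<(6::nat)} - n1.N) = 1" using K1(1) by simp
    then obtain f where f: "{..<(6::nat)} - n1.N = {f}" using card_1_singletonE by blast
    obtain a b c where abc: "a \<in> n1.N" "b \<in> n1.N" "c \<in> n1.N" "a \<noteq> b" "b \<noteq> c" "a \<noteq> c"
      using three_in[of n1.N] n1.N_sub K1(1) by auto
    obtain M where M: "\<exists>c\<in>idx2. M c \<noteq> 0" "wl a M = 0" "wl b M = 0" "wl c M = 0" using kill by blast
    have allN: "\<forall>l\<in>n1.N. wl l M = 0" using K1(2)[OF abc M(2-4)] .
    have "f < 6" using f by blast
    moreover have "\<forall>l<6. l \<noteq> f \<longrightarrow> wl l M = 0" using allN f by blast
    ultimately show False using one_alive_False[OF M(1)] by blast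
  next
    case False
    have fN: "finite n1.N" "finite n2.N" using n1.N_sub n2.N_sub by auto
    have "card (n1.N \<union> n2.N) \<le> card {..<(6::nat)}" by (rule card_mono) (use n1.N_sub n2.N_sub in auto)
    then have cu6: "card (n1.N \<union> n2.N) \<le> 6" by simp
    have "card (n1.N \<union> n2.N) \<noteq> 5"
    proof
      assume c: "card (n1.N \<union> n2.N) = 5"
      have "n1.N = n1.N \<union> n2.N" by (rule card_subset_eq) (use fN c K1(1) in auto)
      moreover have "n2.N = n1.N \<union> n2.N" by (rule card_subset_eq) (use fN c K2(1) in auto)
      ultimately show False using False by simp
    qed
    moreover have "card n1.N \<le> card (n1.N \<union> n2.N)" by (rule card_mono) (use fN in auto)
    ultimately have cu: "card (n1.N \<union> n2.N) = 6" using K1(1) cu6 by simp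
    have "card (n1.N \<union> n2.N) + card (n1.N \<inter> n2.N) = card n1.N + card n2.N"
      using card_Un_Int[OF fN] by simp
    then have ci: "card (n1.N \<inter> n2.N) = 4" using cu K1(1) K2(1) by simp
    obtain a b c where abc: "a \<in> n1.N \<inter> n2.N" "b \<in> n1.N \<inter> n2.N" "c \<in> n1.N \<inter> n2.N" "a \<noteq> b" "b \<noteq> c" "a \<noteq> c"
      using three_in[of "n1.N \<inter> n2.N"] fN ci by auto
    obtain M where M: "\<exists>c\<in>idx2. M c \<noteq> 0" "wl a M = 0" "wl b M = 0" "wl c M = 0" using kill by blast
    have a1: "\<forall>l\<in>n1.N. wl l M = 0" using K1(2)[of a b c M] abc M by blast
    have a2: "\<forall>l\<in>n2.N. wl l M = 0" using K2(2)[of a b c M] abc M by blast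
    have "n1.N \<union> n2.N = {..<6}" by (rule card_subset_eq) (use n1.N_sub n2.N_sub cu in auto)
    then have "\<forall>l<6. l \<noteq> 0 \<longrightarrow> wl l M = 0" using a1 a2 by blast
    then show False using one_alive_False[OF M(1), of 0] by simp
  qed
qed
end

definition ea :: "nat \<Rightarrow> nat \<times> nat" where "ea l = (l div 8 + 1, (l div 4) mod 2 + 1)"
definition eb :: "nat \<Rightarrow> nat \<times> nat" where "eb l = ((l div 2) mod 2 + 1, l mod 2 + 1)"

lemma sum16: "(\<Sum>l<(16::nat). f l) = f 0 + f 1 + f 2 + f 3 + f 4 + f 5 + f 6 + f 7 + f 8 + f 9 + f 10 + f 11 + f 12 + f 13 + f 14 + (f 15 :: 'a::comm_monoid_add)"
  by (simp add: eval_nat_numeral)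

lemma exists_dec:
  fixes T :: "nat \<times> nat \<Rightarrow> nat \<times> nat \<Rightarrow> nat \<times> nat \<Rightarrow> 'a::field"
  shows "sum_of_simple T 16"
  unfolding sum_of_simple_def
proof (intro exI ballI)
  fix a b c assume a: "a \<in> idx2" and b: "b \<in> idx2" and c: "c \<in> idx2"
  show "T a b c = (\<Sum>l<16. (\<lambda>l a. if a = ea l then 1 else 0) l a * (\<lambda>l b. if b = eb l then 1 else 0) l b * (\<lambda>l c. T (ea l) (eb l) c) l c)"
    using a b unfolding sum16 idx2_def by (auto simp: ea_def eb_def)
qed

lemma no_dec_le6:
  fixes q :: "'a::field"
  assumes q: "q \<noteq> 0" and s: "sum_of_simple (mm222q q) r" and r: "r < 7"
  shows False
proof -
  obtain u v w where uvw: "\<forall>a\<in>idx2. \<forall>b\<in>idx2. \<forall>c\<in>idx2. mm222q q a b c = (\<Sum>l<r. u l a * v l b * w l c)"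
    using s unfolding sum_of_simple_def by blast
  define u' where "u' l = (if l < r then u l else (\<lambda>_. 0))" for l
  define v' where "v' l = (if l < r then v l else (\<lambda>_. 0))" for l
  define w' where "w' l = (if l < r then w l else (\<lambda>_. 0))" for l
  have "dec6 q u' v' w'"
  proof
    show "q \<noteq> 0" by (rule q)
  next
    fix a b c assume a: "a \<in> idx2" and b: "b \<in> idx2" and c: "c \<in> idx2"
    have "(\<Sum>l<6. u' l a * v' l b * w' l c) = (\<Sum>l<r. u' l a * v' l b * w' l c)"
      by (rule sum.mono_neutral_right) (use r in \<open>auto simp: u'_def\<close>)
    also have "\<dots> = (\<Sum>l<r. u l a * v l b * w l c)"
      by (rule sum.cong) (auto simp: u'_def v'_def w'_def)
    finally show "mm222q q a b c = (\<Sum>l<6. u' l a * v' l b * w' l c)" using uvw a b c by simp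
  qed
  then show False by (rule dec6.final_False)
qed

theorem mainTheorem4:
  fixes q :: "'a::field"
  assumes "q \<noteq> 0"
  shows "tensor_rank (mm222q q) \<ge> 7"
proof -
  have ex: "\<exists>r. sum_of_simple (mm222q q) r" using exists_dec by blast
  have "sum_of_simple (mm222q q) (tensor_rank (mm222q q))"
    unfolding tensor_rank_def by (rule LeastI_ex[OF ex])
  then show ?thesis using no_dec_le6[OF assms] by (metis not_less)
qed

end
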